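(* Let $\phi\cong\bigoplus_{i\in\mathcal I}\phi_i^{\oplus m_i}$ be a semisimple finite-dimensional complex representation of a compact Lie algebra $\mathfrak{g}$, with pairwise inequivalent irreducible $\phi_i$ and multiplicities $m_i$, and let $\mathfrak{h}$ be a Lie subalgebra of $\mathfrak{g}$. Write $\phi|_{\mathfrak{h}}\cong\bigoplus_{j\in\mathcal J}\psi_j^{\oplus n_j}$ and $\phi_i|_{\mathfrak{h}}\cong\bigoplus_{j\in\mathcal J}\psi_j^{\oplus n_{ji}}$ with pairwise inequivalent irreducible representations $\psi_j$ of $\mathfrak{h}$, so that $n_j=\sum_i n_{ji}m_i$. Then: (a) $\|\phi_i|_{\mathfrak{h}}\|_1=1$ for all $i$ with $m_i\ne0$ if and only if $\|\phi|_{\mathfrak{h}}\|_1=\|\phi\|_1$; (b) $\|\phi|_{\mathfrak{h}}\|_2=\|\phi\|_2$ implies $\|\phi|_{\mathfrak{h}}\|_1=\|\phi\|_1$; (c) $\|\phi|_{\mathfrak{h}}\|_2=\|\phi\|_2$ holds if and only if $\|\phi|_{\mathfrak{h}}\|_1=\|\phi\|_1$ and $\phi_i|_{\mathfrak{h}}\not\cong\phi_k|_{\mathfrak{h}}$ for all $i\ne k$ with $m_i\ne0$ and $m_k\ne0$.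
   Context: For a semisimple representation $\psi\cong\bigoplus_i\psi_i^{\oplus m_i}$ (pairwise inequivalent irreducible $\psi_i$), $\|\psi\|_1=\sum_i m_i$ and $\|\psi\|_2=\sum_i m_i^2$. Restrictions of semisimple representations of compact Lie algebras to subalgebras are semisimple. *)

theory Defs
  imports Complex_Main "HOL-Analysis.Analysis" "Jordan_Normal_Form.Matrix"
begin

definition lie_algebra :: "('g::euclidean_space \<Rightarrow> 'g \<Rightarrow> 'g) \<Rightarrow> bool" where
  "lie_algebra br \<longleftrightarrow>
     (\<forall>x y z. br (x + y) z = br x z + br y z) \<and>
     (\<forall>(a::real) x y. br (a *\<^sub>R x) y = a *\<^sub>R br x y) \<and>
     (\<forall>x. br x x = 0) \<and>
     (\<forall>x y z. br x (br y z) + br y (br z x) + br z (br x y) = 0)"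

text \<open>Compact Lie algebra: admits an ad-invariant inner product.\<close>
definition compact_lie_algebra :: "('g::euclidean_space \<Rightarrow> 'g \<Rightarrow> 'g) \<Rightarrow> bool" where
  "compact_lie_algebra br \<longleftrightarrow> lie_algebra br \<and>
     (\<exists>B :: 'g \<Rightarrow> 'g \<Rightarrow> real.
        (\<forall>x y z. B (x + y) z = B x z + B y z) \<and>
        (\<forall>a x y. B (a *\<^sub>R x) y = a * B x y) \<and>
        (\<forall>x y. B x y = B y x) \<and>
        (\<forall>x. x \<noteq> 0 \<longrightarrow> B x x > 0) \<and>
        (\<forall>x y z. B (br x y) z + B y (br x z) = 0))"

definition lie_subalgebra :: "('g::euclidean_space \<Rightarrow> 'g \<Rightarrow> 'g) \<Rightarrow> 'g set \<Rightarrow> bool" where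
  "lie_subalgebra br H \<longleftrightarrow> 0 \<in> H \<and>
     (\<forall>x\<in>H. \<forall>y\<in>H. x + y \<in> H) \<and>
     (\<forall>(a::real). \<forall>x\<in>H. a *\<^sub>R x \<in> H) \<and>
     (\<forall>x\<in>H. \<forall>y\<in>H. br x y \<in> H)"

text \<open>Representations of a subalgebra
  are only looked at on S; restriction to H is the same pair viewed on H.\<close>
type_synonym 'g rep = "nat \<times> ('g \<Rightarrow> complex mat)"

definition is_rep :: "('g::euclidean_space \<Rightarrow> 'g \<Rightarrow> 'g) \<Rightarrow> 'g set \<Rightarrow> 'g rep \<Rightarrow> bool" where
  "is_rep br S r \<longleftrightarrow> (case r of (d, \<rho>) \<Rightarrow>
     (\<forall>x\<in>S. \<rho> x \<in> carrier_mat d d) \<and>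
     (\<forall>x\<in>S. \<forall>y\<in>S. \<rho> (x + y) = \<rho> x + \<rho> y) \<and>
     (\<forall>(a::real). \<forall>x\<in>S. \<rho> (a *\<^sub>R x) = complex_of_real a \<cdot>\<^sub>m \<rho> x) \<and>
     (\<forall>x\<in>S. \<forall>y\<in>S. \<rho> (br x y) = \<rho> x * \<rho> y - \<rho> y * \<rho> x))"

definition is_subspace :: "nat \<Rightarrow> complex vec set \<Rightarrow> bool" where
  "is_subspace d W \<longleftrightarrow> W \<subseteq> carrier_vec d \<and> 0\<^sub>v d \<in> W \<and>
     (\<forall>v\<in>W. \<forall>w\<in>W. v + w \<in> W) \<and> (\<forall>c. \<forall>v\<in>W. c \<cdot>\<^sub>v v \<in> W)"

definition irreducible_rep :: "('g::euclidean_space \<Rightarrow> 'g \<Rightarrow> 'g) \<Rightarrow> 'g set \<Rightarrow> 'g rep \<Rightarrow> bool" where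
  "irreducible_rep br S r \<longleftrightarrow> is_rep br S r \<and> (case r of (d, \<rho>) \<Rightarrow>
     d > 0 \<and>
     (\<forall>W. is_subspace d W \<and> (\<forall>x\<in>S. \<forall>v\<in>W. \<rho> x *\<^sub>v v \<in> W) \<longrightarrow>
          W = {0\<^sub>v d} \<or> W = carrier_vec d))"

definition rep_equiv :: "('g::euclidean_space \<Rightarrow> 'g \<Rightarrow> 'g) \<Rightarrow> 'g set \<Rightarrow> 'g rep \<Rightarrow> 'g rep \<Rightarrow> bool" where
  "rep_equiv br S r s \<longleftrightarrow> is_rep br S r \<and> is_rep br S s \<and>
     (case r of (d, \<rho>) \<Rightarrow> case s of (e, \<sigma>) \<Rightarrow>
       d = e \<and> (\<exists>T \<in> carrier_mat d d. invertible_mat T \<and> (\<forall>x\<in>S. T * \<rho> x = \<sigma> x * T)))"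

definition dsum2 :: "'g rep \<Rightarrow> 'g rep \<Rightarrow> 'g rep" where
  "dsum2 r s = (case r of (d1, \<rho>1) \<Rightarrow> case s of (d2, \<rho>2) \<Rightarrow>
     (d1 + d2, \<lambda>x. four_block_mat (\<rho>1 x) (0\<^sub>m d1 d2) (0\<^sub>m d2 d1) (\<rho>2 x)))"

definition dsum_list :: "'g rep list \<Rightarrow> 'g rep" where
  "dsum_list rs = foldr dsum2 rs (0, \<lambda>x. 0\<^sub>m 0 0)"

definition multi_sum :: "(nat \<Rightarrow> 'g rep) \<Rightarrow> (nat \<Rightarrow> nat) \<Rightarrow> nat \<Rightarrow> 'g rep" where
  "multi_sum \<phi>s m p = dsum_list (concat (map (\<lambda>i. replicate (m i) (\<phi>s i)) [0..<p]))"

end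

theory Submission
  imports Defs "Jordan_Normal_Form.Determinant"
begin

lemma inv_mat_iff:
  assumes T: "T \<in> carrier_mat n n"
  shows "invertible_mat T \<longleftrightarrow> (\<exists>B\<in>carrier_mat n n. T * B = 1\<^sub>m n \<and> B * T = 1\<^sub>m n)"
proof
  assume "invertible_mat T"
  then obtain B where 1: "T * B = 1\<^sub>m n" and 2: "B * T = 1\<^sub>m (dim_row B)"
    unfolding invertible_mat_def inverts_mat_def using T by auto
  have "dim_row B = n" using arg_cong[OF 2, of dim_col] T by auto
  moreover have "dim_col B = n" using arg_cong[OF 1, of dim_col] T by auto
  ultimately show "\<exists>B\<in>carrier_mat n n. T * B = 1\<^sub>m n \<and> B * T = 1\<^sub>m n" using 1 2 by auto
next
  assume "\<exists>B\<in>carrier_mat n n. T * B = 1\<^sub>m n \<and> B * T = 1\<^sub>m n"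
  then show "invertible_mat T" using T unfolding invertible_mat_def inverts_mat_def
    by (metis carrier_matD(1) carrier_matD(2) square_mat.simps)
qed

lemma rep_equiv_iff:
  "rep_equiv br S (d,\<rho>) (e,\<sigma>) \<longleftrightarrow> is_rep br S (d,\<rho>) \<and> is_rep br S (e,\<sigma>) \<and> d = e \<and>
     (\<exists>T\<in>carrier_mat d d. \<exists>B\<in>carrier_mat d d. T * B = 1\<^sub>m d \<and> B * T = 1\<^sub>m d \<and> (\<forall>x\<in>S. T * \<rho> x = \<sigma> x * T))"
proof -
  have "(\<exists>T\<in>carrier_mat d d. invertible_mat T \<and> (\<forall>x\<in>S. T * \<rho> x = \<sigma> x * T)) \<longleftrightarrow>
    (\<exists>T\<in>carrier_mat d d. \<exists>B\<in>carrier_mat d d. T * B = 1\<^sub>m d \<and> B * T = 1\<^sub>m d \<and> (\<forall>x\<in>S. T * \<rho> x = \<sigma> x * T))"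
    using inv_mat_iff[of _ d] by blast
  then show ?thesis unfolding rep_equiv_def by auto
qed

lemma is_rep_carrier: "is_rep br S (d,\<rho>) \<Longrightarrow> x \<in> S \<Longrightarrow> \<rho> x \<in> carrier_mat d d"
  unfolding is_rep_def by auto

lemma rep_equiv_refl: "is_rep br S r \<Longrightarrow> rep_equiv br S r r"
proof (cases r)
  case (Pair d \<rho>)
  assume r: "is_rep br S r"
  show ?thesis unfolding Pair rep_equiv_iff
    using r Pair is_rep_carrier[of br S d \<rho>]
    apply (intro conjI, auto intro!: bexI[of _ "1\<^sub>m d"])
    by (metis left_mult_one_mat right_mult_one_mat)
qed

lemma rep_equiv_sym: assumes "rep_equiv br S r s" shows "rep_equiv br S s r"
proof (cases r; cases s)
  fix d \<rho> e \<sigma> assume r: "r = (d,\<rho>)" and s: "s = (e,\<sigma>)"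
  from assms[unfolded r s rep_equiv_iff] obtain T B where
    reps: "is_rep br S (d,\<rho>)" "is_rep br S (e,\<sigma>)" and de: "d = e" and
    T: "T \<in> carrier_mat d d" and B: "B \<in> carrier_mat d d" and TB: "T * B = 1\<^sub>m d" and BT: "B * T = 1\<^sub>m d"
    and int: "\<forall>x\<in>S. T * \<rho> x = \<sigma> x * T" by blast
  have "\<forall>x\<in>S. B * \<sigma> x = \<rho> x * B"
  proof
    fix x assume x: "x \<in> S"
    have r: "\<rho> x \<in> carrier_mat d d" and s: "\<sigma> x \<in> carrier_mat d d"
      using is_rep_carrier[OF reps(1) x] is_rep_carrier[OF reps(2) x] de by auto
    have "B * \<sigma> x = B * \<sigma> x * (T * B)" using TB B s by simp
    also have "\<dots> = B * (\<sigma> x * T) * B" using B s T by (simp add: assoc_mult_mat[of _ d d _ d _ d])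
    also have "\<dots> = B * (T * \<rho> x) * B" using int x by simp
    also have "\<dots> = (B * T) * \<rho> x * B" using B r T by (simp add: assoc_mult_mat[of _ d d _ d _ d])
    also have "\<dots> = \<rho> x * B" using BT r by simp
    finally show "B * \<sigma> x = \<rho> x * B" .
  qed
  then show ?thesis unfolding r s rep_equiv_iff using reps de T B TB BT by blast
qed

lemma rep_equiv_trans: assumes "rep_equiv br S r s" "rep_equiv br S s t" shows "rep_equiv br S r t"
proof (cases r; cases s; cases t)
  fix d \<rho> e \<sigma> f \<tau> assume r: "r = (d,\<rho>)" and s: "s = (e,\<sigma>)" and t: "t = (f,\<tau>)"
  from assms(1)[unfolded r s rep_equiv_iff] obtain T B where
    reps: "is_rep br S (d,\<rho>)" "is_rep br S (e,\<sigma>)" and de: "d = e" and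
    T: "T \<in> carrier_mat d d" and B: "B \<in> carrier_mat d d" and TB: "T * B = 1\<^sub>m d" and BT: "B * T = 1\<^sub>m d"
    and int: "\<forall>x\<in>S. T * \<rho> x = \<sigma> x * T" by blast
  from assms(2)[unfolded s t rep_equiv_iff] obtain T' B' where
    rep3: "is_rep br S (f,\<tau>)" and ef: "e = f" and
    T': "T' \<in> carrier_mat d d" and B': "B' \<in> carrier_mat d d" and TB': "T' * B' = 1\<^sub>m d" and BT': "B' * T' = 1\<^sub>m d"
    and int': "\<forall>x\<in>S. T' * \<sigma> x = \<tau> x * T'" using de by blast
  have "T' * T * (B * B') = T' * (T * B) * B'"
    using T B T' B' by (simp add: assoc_mult_mat[of _ d d _ d _ d])
  hence "T' * T * (B * B') = 1\<^sub>m d" using TB TB' T' by simp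
  moreover have "B * B' * (T' * T) = B * (B' * T') * T"
    using T B T' B' by (simp add: assoc_mult_mat[of _ d d _ d _ d])
  hence "B * B' * (T' * T) = 1\<^sub>m d" using BT BT' B by simp
  moreover have "\<forall>x\<in>S. T' * T * \<rho> x = \<tau> x * (T' * T)"
  proof
    fix x assume x: "x \<in> S"
    have r: "\<rho> x \<in> carrier_mat d d" and s: "\<sigma> x \<in> carrier_mat d d" and tt: "\<tau> x \<in> carrier_mat d d"
      using is_rep_carrier[OF reps(1) x] is_rep_carrier[OF reps(2) x] is_rep_carrier[OF rep3 x] de ef by auto
    have "T' * T * \<rho> x = T' * (T * \<rho> x)" using T T' r by (simp add: assoc_mult_mat[of _ d d _ d _ d])
    also have "\<dots> = (T' * \<sigma> x) * T" using int x T T' s by (simp add: assoc_mult_mat[of _ d d _ d _ d])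
    also have "\<dots> = \<tau> x * (T' * T)" using int' x T T' tt by (simp add: assoc_mult_mat[of _ d d _ d _ d])
    finally show "T' * T * \<rho> x = \<tau> x * (T' * T)" .
  qed
  ultimately show ?thesis unfolding r t rep_equiv_iff using reps rep3 de ef T B T' B'
    by (intro conjI, simp_all, intro bexI[of _ "T' * T"] bexI[of _ "B * B'"], auto)
qed

lemma one_one_mat[simp]: "1\<^sub>m n * 1\<^sub>m n = (1\<^sub>m n :: 'a :: semiring_1 mat)"
  by (rule left_mult_one_mat, auto)

lemma swap_mult: "four_block_mat (0\<^sub>m a b) (1\<^sub>m a) (1\<^sub>m b) (0\<^sub>m b a) * four_block_mat (0\<^sub>m b a) (1\<^sub>m b) (1\<^sub>m a) (0\<^sub>m a b) = (1\<^sub>m (a+b) :: complex mat)"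
proof -
  have "four_block_mat (0\<^sub>m a b :: complex mat) (1\<^sub>m a) (1\<^sub>m b) (0\<^sub>m b a) * four_block_mat (0\<^sub>m b a) (1\<^sub>m b) (1\<^sub>m a) (0\<^sub>m a b)
    = four_block_mat (0\<^sub>m a b * 0\<^sub>m b a + 1\<^sub>m a * 1\<^sub>m a) (0\<^sub>m a b * 1\<^sub>m b + 1\<^sub>m a * 0\<^sub>m a b)
        (1\<^sub>m b * 0\<^sub>m b a + 0\<^sub>m b a * 1\<^sub>m a) (1\<^sub>m b * 1\<^sub>m b + 0\<^sub>m b a * 0\<^sub>m a b)"
    by (rule mult_four_block_mat, auto)
  also have "\<dots> = four_block_mat (1\<^sub>m a) (0\<^sub>m a b) (0\<^sub>m b a) (1\<^sub>m b)"
    by (rule cong_four_block_mat, auto)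
  finally show ?thesis by simp
qed

abbreviation bd :: "nat \<Rightarrow> nat \<Rightarrow> nat \<Rightarrow> nat \<Rightarrow> complex mat \<Rightarrow> complex mat \<Rightarrow> complex mat" where
  "bd n1 n2 m1 m2 A D \<equiv> four_block_mat A (0\<^sub>m n1 m2) (0\<^sub>m n2 m1) D"

lemma bd_mult:
  assumes "A \<in> carrier_mat n1 m1" "D \<in> carrier_mat n2 m2" "A' \<in> carrier_mat m1 k1" "D' \<in> carrier_mat m2 k2"
  shows "bd n1 n2 m1 m2 A D * bd m1 m2 k1 k2 A' D' = bd n1 n2 k1 k2 (A * A') (D * D')"
  by (subst mult_four_block_mat[of _ n1 m1 _ m2 _ n2], insert assms, auto)

lemma bd_add:
  assumes "A \<in> carrier_mat n1 m1" "D \<in> carrier_mat n2 m2" "A' \<in> carrier_mat n1 m1" "D' \<in> carrier_mat n2 m2"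
  shows "bd n1 n2 m1 m2 (A + A') (D + D') = bd n1 n2 m1 m2 A D + bd n1 n2 m1 m2 A' D'"
  by (rule eq_matI, insert assms, auto)

lemma bd_minus:
  assumes "A \<in> carrier_mat n1 m1" "D \<in> carrier_mat n2 m2" "A' \<in> carrier_mat n1 m1" "D' \<in> carrier_mat n2 m2"
  shows "bd n1 n2 m1 m2 (A - A') (D - D') = bd n1 n2 m1 m2 A D - bd n1 n2 m1 m2 A' D'"
  by (rule eq_matI, insert assms, auto)

lemma bd_smult:
  assumes "A \<in> carrier_mat n1 m1" "D \<in> carrier_mat n2 m2"
  shows "bd n1 n2 m1 m2 (c \<cdot>\<^sub>m A) (c \<cdot>\<^sub>m D) = c \<cdot>\<^sub>m bd n1 n2 m1 m2 A D"
  by (rule eq_matI, insert assms, auto)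

lemma dsum2_simp: "dsum2 (d1,\<rho>1) (d2,\<rho>2) = (d1 + d2, \<lambda>x. bd d1 d2 d1 d2 (\<rho>1 x) (\<rho>2 x))"
  unfolding dsum2_def by simp

lemma is_rep_dsum2: assumes "is_rep br S r" "is_rep br S s" shows "is_rep br S (dsum2 r s)"
proof (cases r; cases s)
  fix d1 \<rho>1 d2 \<rho>2 assume r: "r = (d1,\<rho>1)" and s: "s = (d2,\<rho>2)"
  note A = assms[unfolded r s is_rep_def, simplified]
  show ?thesis unfolding r s dsum2_simp is_rep_def split
  proof (intro conjI ballI allI)
    fix x assume x: "x \<in> S"
    show "bd d1 d2 d1 d2 (\<rho>1 x) (\<rho>2 x) \<in> carrier_mat (d1 + d2) (d1 + d2)" using A x by auto
  next
    fix x y assume x: "x \<in> S" and y: "y \<in> S"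
    show "bd d1 d2 d1 d2 (\<rho>1 (x + y)) (\<rho>2 (x + y)) = bd d1 d2 d1 d2 (\<rho>1 x) (\<rho>2 x) + bd d1 d2 d1 d2 (\<rho>1 y) (\<rho>2 y)"
      using A x y by (simp add: bd_add)
    show "bd d1 d2 d1 d2 (\<rho>1 (br x y)) (\<rho>2 (br x y)) = bd d1 d2 d1 d2 (\<rho>1 x) (\<rho>2 x) * bd d1 d2 d1 d2 (\<rho>1 y) (\<rho>2 y)
      - bd d1 d2 d1 d2 (\<rho>1 y) (\<rho>2 y) * bd d1 d2 d1 d2 (\<rho>1 x) (\<rho>2 x)"
      using A x y by (simp add: bd_mult, subst bd_minus, auto intro!: mult_carrier_mat)
  next
    fix a :: real and x assume x: "x \<in> S"
    show "bd d1 d2 d1 d2 (\<rho>1 (a *\<^sub>R x)) (\<rho>2 (a *\<^sub>R x)) = complex_of_real a \<cdot>\<^sub>m bd d1 d2 d1 d2 (\<rho>1 x) (\<rho>2 x)"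
      using A x by (simp add: bd_smult)
  qed
qed

declare rep_equiv_trans[trans]

lemma rep_equiv_eqI: assumes "is_rep br S (d,\<rho>)" "is_rep br S (d,\<sigma>)" "\<forall>x\<in>S. \<rho> x = \<sigma> x"
  shows "rep_equiv br S (d,\<rho>) (d,\<sigma>)"
proof -
  have "\<forall>x\<in>S. 1\<^sub>m d * \<rho> x = \<sigma> x * 1\<^sub>m d"
    using assms is_rep_carrier[OF assms(1)] is_rep_carrier[OF assms(2)]
    by (metis left_mult_one_mat right_mult_one_mat)
  then show ?thesis unfolding rep_equiv_iff using assms by (intro conjI, auto intro!: bexI[of _ "1\<^sub>m d"])
qed

lemma dsum2_cong: assumes "rep_equiv br S r r'" "rep_equiv br S s s'"
  shows "rep_equiv br S (dsum2 r s) (dsum2 r' s')"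
proof (cases r; cases r'; cases s; cases s')
  fix d1 \<rho>1 d1' \<rho>1' d2 \<rho>2 d2' \<rho>2' assume r: "r = (d1,\<rho>1)" and r': "r' = (d1',\<rho>1')"
    and s: "s = (d2,\<rho>2)" and s': "s' = (d2',\<rho>2')"
  from assms(1)[unfolded r r' rep_equiv_iff] obtain T1 B1 where
    reps1: "is_rep br S (d1,\<rho>1)" "is_rep br S (d1',\<rho>1')" and d1: "d1' = d1" and
    T1: "T1 \<in> carrier_mat d1 d1" and B1: "B1 \<in> carrier_mat d1 d1" and TB1: "T1 * B1 = 1\<^sub>m d1" and BT1: "B1 * T1 = 1\<^sub>m d1"
    and int1: "\<forall>x\<in>S. T1 * \<rho>1 x = \<rho>1' x * T1" by metis
  from assms(2)[unfolded s s' rep_equiv_iff] obtain T2 B2 where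
    reps2: "is_rep br S (d2,\<rho>2)" "is_rep br S (d2',\<rho>2')" and d2: "d2' = d2" and
    T2: "T2 \<in> carrier_mat d2 d2" and B2: "B2 \<in> carrier_mat d2 d2" and TB2: "T2 * B2 = 1\<^sub>m d2" and BT2: "B2 * T2 = 1\<^sub>m d2"
    and int2: "\<forall>x\<in>S. T2 * \<rho>2 x = \<rho>2' x * T2" by metis
  note c = is_rep_carrier[OF reps1(1)] is_rep_carrier[OF reps1(2)] is_rep_carrier[OF reps2(1)] is_rep_carrier[OF reps2(2)]
  let ?T = "bd d1 d2 d1 d2 T1 T2" let ?B = "bd d1 d2 d1 d2 B1 B2"
  have "?T * ?B = 1\<^sub>m (d1 + d2)" using T1 T2 B1 B2 TB1 TB2 by (simp add: bd_mult)
  moreover have "?B * ?T = 1\<^sub>m (d1 + d2)" using T1 T2 B1 B2 BT1 BT2 by (simp add: bd_mult)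
  moreover have "\<forall>x\<in>S. ?T * bd d1 d2 d1 d2 (\<rho>1 x) (\<rho>2 x) = bd d1 d2 d1 d2 (\<rho>1' x) (\<rho>2' x) * ?T"
    using T1 T2 c int1 int2 d1 d2 by (auto simp: bd_mult)
  ultimately show ?thesis unfolding r r' s s' dsum2_simp rep_equiv_iff d1 d2
    using is_rep_dsum2[OF reps1(1) reps2(1)] is_rep_dsum2[OF reps1(2) reps2(2)] T1 T2 B1 B2
    unfolding dsum2_simp d1 d2
    by (intro conjI, simp_all, intro bexI[of _ ?T] bexI[of _ ?B], auto)
qed


lemma dsum2_swap: assumes "is_rep br S r" "is_rep br S s"
  shows "rep_equiv br S (dsum2 r s) (dsum2 s r)"
proof (cases r; cases s)
  fix d1 \<rho>1 d2 \<rho>2 assume r: "r = (d1,\<rho>1)" and s: "s = (d2,\<rho>2)"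
  note c = is_rep_carrier[OF assms(1)[unfolded r]] is_rep_carrier[OF assms(2)[unfolded s]]
  let ?T = "four_block_mat (0\<^sub>m d2 d1 :: complex mat) (1\<^sub>m d2) (1\<^sub>m d1) (0\<^sub>m d1 d2)"
  let ?B = "four_block_mat (0\<^sub>m d1 d2 :: complex mat) (1\<^sub>m d1) (1\<^sub>m d2) (0\<^sub>m d2 d1)"
  have T0: "?T \<in> carrier_mat (d2+d1) (d1+d2)" by (rule four_block_carrier_mat, auto)
  have T: "?T \<in> carrier_mat (d1+d2) (d1+d2)" using T0 by (simp only: add.commute[of d2 d1])
  have B0: "?B \<in> carrier_mat (d1+d2) (d2+d1)" by (rule four_block_carrier_mat, auto)
  have B: "?B \<in> carrier_mat (d1+d2) (d1+d2)" using B0 by (simp only: add.commute[of d2 d1])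
  have TB: "?T * ?B = 1\<^sub>m (d2 + d1)"
    by (rule swap_mult)
  have BT: "?B * ?T = 1\<^sub>m (d1 + d2)"
    by (rule swap_mult)
  have int: "\<forall>x\<in>S. ?T * bd d1 d2 d1 d2 (\<rho>1 x) (\<rho>2 x) = bd d2 d1 d2 d1 (\<rho>2 x) (\<rho>1 x) * ?T"
  proof
    fix x assume x: "x \<in> S"
    note cx = c[OF x]
    have "?T * bd d1 d2 d1 d2 (\<rho>1 x) (\<rho>2 x) = four_block_mat (0\<^sub>m d2 d1) (\<rho>2 x) (\<rho>1 x) (0\<^sub>m d1 d2)"
      by (subst mult_four_block_mat[of _ d2 d1 _ d2 _ d1 _ _ d1 _ d2], insert cx, auto)
    moreover have "bd d2 d1 d2 d1 (\<rho>2 x) (\<rho>1 x) * ?T = four_block_mat (0\<^sub>m d2 d1) (\<rho>2 x) (\<rho>1 x) (0\<^sub>m d1 d2)"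
      by (subst mult_four_block_mat[of _ d2 d2 _ d1 _ d1 _ _ d1 _ d2], insert cx, auto)
    ultimately show "?T * bd d1 d2 d1 d2 (\<rho>1 x) (\<rho>2 x) = bd d2 d1 d2 d1 (\<rho>2 x) (\<rho>1 x) * ?T" by simp
  qed
  have eq: "d2 + d1 = d1 + d2" by simp
  have main: "\<exists>T\<in>carrier_mat (d1 + d2) (d1 + d2). \<exists>B\<in>carrier_mat (d1 + d2) (d1 + d2).
     T * B = 1\<^sub>m (d1 + d2) \<and> B * T = 1\<^sub>m (d1 + d2) \<and>
     (\<forall>x\<in>S. T * bd d1 d2 d1 d2 (\<rho>1 x) (\<rho>2 x) = bd d2 d1 d2 d1 (\<rho>2 x) (\<rho>1 x) * T)"
    apply (rule bexI[of _ ?T], rule bexI[of _ ?B])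
    using T B TB BT int unfolding eq by auto
  show ?thesis unfolding r s dsum2_simp rep_equiv_iff
    using is_rep_dsum2[OF assms(1) assms(2)] is_rep_dsum2[OF assms(2) assms(1)] main
    unfolding r s dsum2_simp by simp
qed

lemma dsum2_assoc: assumes "is_rep br S r" "is_rep br S s" "is_rep br S t"
  shows "rep_equiv br S (dsum2 (dsum2 r s) t) (dsum2 r (dsum2 s t))"
proof (cases r; cases s; cases t)
  fix d1 \<rho>1 d2 \<rho>2 d3 \<rho>3 assume r: "r = (d1,\<rho>1)" and s: "s = (d2,\<rho>2)" and t: "t = (d3,\<rho>3)"
  note c = is_rep_carrier[OF assms(1)[unfolded r]] is_rep_carrier[OF assms(2)[unfolded s]]
    is_rep_carrier[OF assms(3)[unfolded t]]
  have 1: "is_rep br S (dsum2 (dsum2 r s) t)" "is_rep br S (dsum2 r (dsum2 s t))"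
    using assms by (auto intro!: is_rep_dsum2)
  have eq: "\<forall>x\<in>S. bd (d1+d2) d3 (d1+d2) d3 (bd d1 d2 d1 d2 (\<rho>1 x) (\<rho>2 x)) (\<rho>3 x)
     = bd d1 (d2+d3) d1 (d2+d3) (\<rho>1 x) (bd d2 d3 d2 d3 (\<rho>2 x) (\<rho>3 x))"
  proof
    fix x assume x: "x \<in> S"
    note cx = c[OF x]
    show "bd (d1+d2) d3 (d1+d2) d3 (bd d1 d2 d1 d2 (\<rho>1 x) (\<rho>2 x)) (\<rho>3 x)
     = bd d1 (d2+d3) d1 (d2+d3) (\<rho>1 x) (bd d2 d3 d2 d3 (\<rho>2 x) (\<rho>3 x))"
      by (rule eq_matI, insert cx, auto)
  qed
  show ?thesis using 1 eq rep_equiv_eqI[of br S "d1+d2+d3"]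
    unfolding r s t dsum2_simp by (simp add: add.assoc)
qed

definition zrep :: "'g rep" where "zrep = (0, \<lambda>x. 0\<^sub>m 0 0)"

lemma is_rep_zrep: "is_rep br S zrep"
  unfolding zrep_def is_rep_def by (auto intro!: eq_matI)

lemma dsum2_zero_right: assumes "is_rep br S r" shows "rep_equiv br S (dsum2 r zrep) r"
proof (cases r)
  case (Pair d \<rho>)
  note c = is_rep_carrier[OF assms[unfolded Pair]]
  have "is_rep br S (dsum2 r zrep)" using assms is_rep_zrep by (rule is_rep_dsum2)
  moreover have "\<forall>x\<in>S. bd d 0 d 0 (\<rho> x) (0\<^sub>m 0 0) = \<rho> x"
    using c by (auto intro!: eq_matI)
  ultimately show ?thesis using rep_equiv_eqI[of br S d] assms unfolding Pair zrep_def dsum2_simp by simp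
qed

lemma dsum2_zero_left: assumes "is_rep br S r" shows "rep_equiv br S (dsum2 zrep r) r"
proof (cases r)
  case (Pair d \<rho>)
  note c = is_rep_carrier[OF assms[unfolded Pair]]
  have "is_rep br S (dsum2 zrep r)" using is_rep_zrep assms by (rule is_rep_dsum2)
  moreover have "\<forall>x\<in>S. bd 0 d 0 d (0\<^sub>m 0 0) (\<rho> x) = \<rho> x"
    using c by (auto intro!: eq_matI)
  ultimately show ?thesis using rep_equiv_eqI[of br S d] assms unfolding Pair zrep_def dsum2_simp by simp
qed

lemma dsum_list_simps: "dsum_list [] = zrep" "dsum_list (r # rs) = dsum2 r (dsum_list rs)"
  unfolding dsum_list_def zrep_def by auto

lemma is_rep_dsum_list: "\<forall>r\<in>set rs. is_rep br S r \<Longrightarrow> is_rep br S (dsum_list rs)"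
  by (induction rs, auto simp: dsum_list_simps is_rep_zrep intro!: is_rep_dsum2)

lemma fst_dsum_list: "fst (dsum_list rs) = sum_list (map fst rs)"
  by (induction rs, auto simp: dsum_list_simps zrep_def dsum2_def split: prod.splits)

lemma dsum_list_append: assumes "\<forall>r\<in>set xs. is_rep br S r" "\<forall>r\<in>set ys. is_rep br S r"
  shows "rep_equiv br S (dsum_list (xs @ ys)) (dsum2 (dsum_list xs) (dsum_list ys))"
  using assms(1)
proof (induction xs)
  case Nil
  show ?case unfolding dsum_list_simps append.simps
    by (rule rep_equiv_sym, rule dsum2_zero_left, rule is_rep_dsum_list, fact)
next
  case (Cons x xs)
  have x: "is_rep br S x" and xs: "\<forall>r\<in>set xs. is_rep br S r" using Cons by auto
  have Lxs: "is_rep br S (dsum_list xs)" and Lys: "is_rep br S (dsum_list ys)"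
    using xs assms(2) by (auto intro!: is_rep_dsum_list)
  have "rep_equiv br S (dsum2 x (dsum_list (xs @ ys))) (dsum2 x (dsum2 (dsum_list xs) (dsum_list ys)))"
    by (rule dsum2_cong[OF rep_equiv_refl[OF x] Cons.IH[OF xs]])
  also note dsum2_assoc[OF x Lxs Lys, THEN rep_equiv_sym]
  finally show ?case unfolding dsum_list_simps append.simps .
qed


lemma dsum_list_perm: assumes "mset xs = mset ys" "\<forall>r\<in>set xs. is_rep br S r"
  shows "rep_equiv br S (dsum_list xs) (dsum_list ys)"
  using assms
proof (induction xs arbitrary: ys)
  case Nil
  then show ?case by (simp add: dsum_list_simps rep_equiv_refl is_rep_zrep)
next
  case (Cons x xs)
  have "x \<in> set ys" using Cons.prems(1) by (metis list.set_intros(1) set_mset_mset)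
  then obtain ys1 ys2 where ys: "ys = ys1 @ x # ys2" by (meson split_list)
  have m: "mset xs = mset (ys1 @ ys2)" using Cons.prems(1) ys by simp
  have x: "is_rep br S x" and xs: "\<forall>r\<in>set xs. is_rep br S r" using Cons.prems by auto
  have sety: "set ys = set (x # xs)" using Cons.prems(1) by (metis set_mset_mset)
  have y1: "\<forall>r\<in>set ys1. is_rep br S r" and y2: "\<forall>r\<in>set ys2. is_rep br S r"
    using Cons.prems(2) sety ys by auto
  have L1: "is_rep br S (dsum_list ys1)" and L2: "is_rep br S (dsum_list ys2)"
    using y1 y2 by (auto intro!: is_rep_dsum_list)
  have "rep_equiv br S (dsum_list ys) (dsum2 (dsum_list ys1) (dsum_list (x # ys2)))"
    unfolding ys by (rule dsum_list_append, insert y1 y2 x, auto)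
  also have "dsum_list (x # ys2) = dsum2 x (dsum_list ys2)" by (simp add: dsum_list_simps)
  also have "rep_equiv br S (dsum2 (dsum_list ys1) (dsum2 x (dsum_list ys2))) (dsum2 (dsum2 (dsum_list ys1) x) (dsum_list ys2))"
    by (rule rep_equiv_sym, rule dsum2_assoc[OF L1 x L2])
  also have "rep_equiv br S \<dots> (dsum2 (dsum2 x (dsum_list ys1)) (dsum_list ys2))"
    by (rule dsum2_cong[OF dsum2_swap[OF L1 x] rep_equiv_refl[OF L2]])
  also have "rep_equiv br S \<dots> (dsum2 x (dsum2 (dsum_list ys1) (dsum_list ys2)))"
    by (rule dsum2_assoc[OF x L1 L2])
  also have "rep_equiv br S \<dots> (dsum2 x (dsum_list (ys1 @ ys2)))"
    by (rule dsum2_cong[OF rep_equiv_refl[OF x] rep_equiv_sym[OF dsum_list_append[OF y1 y2]]])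
  also have "rep_equiv br S \<dots> (dsum2 x (dsum_list xs))"
    by (rule dsum2_cong[OF rep_equiv_refl[OF x] rep_equiv_sym[OF Cons.IH[OF m xs]]])
  finally show ?case unfolding dsum_list_simps by (rule rep_equiv_sym)
qed

lemma dsum_list_cong: assumes "list_all2 (rep_equiv br S) xs ys"
  shows "rep_equiv br S (dsum_list xs) (dsum_list ys)"
  using assms
proof (induction xs arbitrary: ys)
  case Nil
  then show ?case by (simp add: dsum_list_simps rep_equiv_refl is_rep_zrep)
next
  case (Cons x xs)
  then obtain y ys' where ys: "ys = y # ys'" and xy: "rep_equiv br S x y" and r: "list_all2 (rep_equiv br S) xs ys'"
    by (cases ys, auto)
  show ?case unfolding ys dsum_list_simps by (rule dsum2_cong[OF xy Cons.IH[OF r]])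
qed

lemma mat_zero_if_kills: fixes A :: "complex mat" assumes A: "A \<in> carrier_mat e d" and k: "\<forall>v\<in>carrier_vec d. A *\<^sub>v v = 0\<^sub>v e"
  shows "A = 0\<^sub>m e d"
proof (rule eq_matI)
  fix i j assume i: "i < dim_row (0\<^sub>m e d :: complex mat)" and j: "j < dim_col (0\<^sub>m e d :: complex mat)"
  have "(A *\<^sub>v unit_vec d j) $ i = 0" using k i by auto
  moreover have "(A *\<^sub>v unit_vec d j) $ i = A $$ (i,j)" using A i j by auto
  ultimately show "A $$ (i,j) = 0\<^sub>m e d $$ (i,j)" using i j by auto
qed (insert A, auto)

lemma schur_inj:
  assumes irr: "irreducible_rep br S (d,\<rho>)" and rep: "is_rep br S (e,\<sigma>)"
    and al: "\<alpha> \<in> carrier_mat e d" and int: "\<forall>x\<in>S. \<alpha> * \<rho> x = \<sigma> x * \<alpha>" and nz: "\<alpha> \<noteq> 0\<^sub>m e d"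
    and v: "v \<in> carrier_vec d" and av: "\<alpha> *\<^sub>v v = 0\<^sub>v e"
  shows "v = 0\<^sub>v d"
proof -
  let ?W = "{v \<in> carrier_vec d. \<alpha> *\<^sub>v v = 0\<^sub>v e}"
  have repa: "is_rep br S (d,\<rho>)" using irr unfolding irreducible_rep_def by auto
  note ca = is_rep_carrier[OF repa] and cb = is_rep_carrier[OF rep]
  have sub: "is_subspace d ?W" unfolding is_subspace_def
  proof (intro conjI ballI allI)
    fix v w assume v: "v \<in> ?W" and w: "w \<in> ?W"
    show "v + w \<in> ?W" using v w al by (auto simp: mult_add_distrib_mat_vec)
  next
    fix c :: complex and v assume v: "v \<in> ?W"
    show "c \<cdot>\<^sub>v v \<in> ?W" using v al by (auto simp: mult_mat_vec)
  qed (insert al, auto)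
  have inv: "\<forall>x\<in>S. \<forall>v\<in>?W. \<rho> x *\<^sub>v v \<in> ?W"
  proof (intro ballI)
    fix x v assume x: "x \<in> S" and v: "v \<in> ?W"
    have "\<alpha> *\<^sub>v (\<rho> x *\<^sub>v v) = (\<alpha> * \<rho> x) *\<^sub>v v" using al ca[OF x] v by auto
    also have "\<dots> = (\<sigma> x * \<alpha>) *\<^sub>v v" using int x by simp
    also have "\<dots> = \<sigma> x *\<^sub>v (\<alpha> *\<^sub>v v)" using al cb[OF x] v by auto
    also have "\<dots> = 0\<^sub>v e" using v cb[OF x] by auto
    finally show "\<rho> x *\<^sub>v v \<in> ?W" using v ca[OF x] by auto
  qed
  have "?W = {0\<^sub>v d} \<or> ?W = carrier_vec d" using irr sub inv unfolding irreducible_rep_def by auto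
  moreover have "?W \<noteq> carrier_vec d"
  proof
    assume "?W = carrier_vec d"
    then have "\<forall>v\<in>carrier_vec d. \<alpha> *\<^sub>v v = 0\<^sub>v e" by auto
    then show False using mat_zero_if_kills[OF al] nz by auto
  qed
  ultimately show ?thesis using v av by auto
qed

lemma schur_surj:
  assumes rep: "is_rep br S (d,\<rho>)" and irr: "irreducible_rep br S (e,\<sigma>)"
    and al: "\<alpha> \<in> carrier_mat e d" and int: "\<forall>x\<in>S. \<alpha> * \<rho> x = \<sigma> x * \<alpha>" and nz: "\<alpha> \<noteq> 0\<^sub>m e d"
    and w: "w \<in> carrier_vec e"
  shows "\<exists>v\<in>carrier_vec d. \<alpha> *\<^sub>v v = w"
proof -
  let ?W = "(\<lambda>v. \<alpha> *\<^sub>v v) ` carrier_vec d"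
  have repb: "is_rep br S (e,\<sigma>)" using irr unfolding irreducible_rep_def by auto
  note ca = is_rep_carrier[OF rep] and cb = is_rep_carrier[OF repb]
  have sub: "is_subspace e ?W" unfolding is_subspace_def
  proof (intro conjI ballI allI)
    show "?W \<subseteq> carrier_vec e" using al by auto
    show "0\<^sub>v e \<in> ?W" using al by (intro image_eqI[of _ _ "0\<^sub>v d"], auto)
  next
    fix v w assume v: "v \<in> ?W" and w: "w \<in> ?W"
    then obtain v' w' where "v' \<in> carrier_vec d" "w' \<in> carrier_vec d" "v = \<alpha> *\<^sub>v v'" "w = \<alpha> *\<^sub>v w'" by auto
    then show "v + w \<in> ?W" using al by (intro image_eqI[of _ _ "v' + w'"], auto simp: mult_add_distrib_mat_vec)
  next
    fix c :: complex and v assume v: "v \<in> ?W"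
    then obtain v' where "v' \<in> carrier_vec d" "v = \<alpha> *\<^sub>v v'" by auto
    then show "c \<cdot>\<^sub>v v \<in> ?W" using al by (intro image_eqI[of _ _ "c \<cdot>\<^sub>v v'"], auto simp: mult_mat_vec)
  qed
  have inv: "\<forall>x\<in>S. \<forall>v\<in>?W. \<sigma> x *\<^sub>v v \<in> ?W"
  proof (intro ballI)
    fix x v assume x: "x \<in> S" and v: "v \<in> ?W"
    then obtain v' where v': "v' \<in> carrier_vec d" "v = \<alpha> *\<^sub>v v'" by auto
    have "\<sigma> x *\<^sub>v v = (\<sigma> x * \<alpha>) *\<^sub>v v'" using al cb[OF x] v' by auto
    also have "\<dots> = (\<alpha> * \<rho> x) *\<^sub>v v'" using int x by simp
    also have "\<dots> = \<alpha> *\<^sub>v (\<rho> x *\<^sub>v v')" using al ca[OF x] v' by auto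
    finally show "\<sigma> x *\<^sub>v v \<in> ?W" using v' ca[OF x] by auto
  qed
  have "?W = {0\<^sub>v e} \<or> ?W = carrier_vec e" using irr sub inv unfolding irreducible_rep_def by auto
  moreover have "?W \<noteq> {0\<^sub>v e}"
  proof
    assume "?W = {0\<^sub>v e}"
    then have "\<forall>v\<in>carrier_vec d. \<alpha> *\<^sub>v v = 0\<^sub>v e" by auto
    then show False using mat_zero_if_kills[OF al] nz by auto
  qed
  ultimately have "?W = carrier_vec e" by auto
  then show ?thesis using w by (metis imageE)
qed

lemma inj_square_inv: fixes A :: "complex mat"
  assumes A: "A \<in> carrier_mat d d" and inj: "\<forall>v\<in>carrier_vec d. A *\<^sub>v v = 0\<^sub>v d \<longrightarrow> v = 0\<^sub>v d"
  shows "\<exists>B\<in>carrier_mat d d. A * B = 1\<^sub>m d \<and> B * A = 1\<^sub>m d"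
proof -
  have "det A \<noteq> 0" using det_0_iff_vec_prod_zero_field[OF A] inj by auto
  from det_non_zero_imp_unit[OF A this, of "()"]
  show ?thesis unfolding Units_def ring_mat_def by auto
qed

lemma inj_le: fixes A :: "complex mat"
  assumes A: "A \<in> carrier_mat e d" and inj: "\<forall>v\<in>carrier_vec d. A *\<^sub>v v = 0\<^sub>v e \<longrightarrow> v = 0\<^sub>v d"
  shows "d \<le> e"
proof (rule ccontr)
  assume "\<not> d \<le> e"
  hence ed: "e < d" by auto
  define A' where "A' = mat d d (\<lambda>(i,j). if i < e then A $$ (i,j) else (0::complex))"
  have A': "A' \<in> carrier_mat d d" unfolding A'_def by auto
  have ent: "(A' *\<^sub>v v) $ i = (if i < e then (A *\<^sub>v v) $ i else 0)" if "i < d" "v \<in> carrier_vec d" for i v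
  proof -
    have r: "row A' i = (if i < e then row A i else 0\<^sub>v d)" using that A unfolding A'_def by (auto intro!: eq_vecI)
    show ?thesis using that A A' r by auto
  qed
  have "\<forall>v\<in>carrier_vec d. A' *\<^sub>v v = 0\<^sub>v d \<longrightarrow> v = 0\<^sub>v d"
  proof (intro ballI impI)
    fix v :: "complex vec" assume v: "v \<in> carrier_vec d" and z: "A' *\<^sub>v v = 0\<^sub>v d"
    have "A *\<^sub>v v = 0\<^sub>v e"
    proof (rule eq_vecI)
      fix i assume i: "i < dim_vec (0\<^sub>v e :: complex vec)"
      have "(A' *\<^sub>v v) $ i = 0" using z i ed by auto
      then show "(A *\<^sub>v v) $ i = 0\<^sub>v e $ i" using ent[of i v] i ed v by auto
    qed (insert A, auto)
    then show "v = 0\<^sub>v d" using inj v by auto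
  qed
  from inj_square_inv[OF A' this] obtain B where B: "B \<in> carrier_mat d d" and AB: "A' * B = 1\<^sub>m d" by auto
  have "(A' * B) $$ (d - 1, d - 1) = 1" using AB ed by auto
  moreover have "(A' * B) $$ (d - 1, d - 1) = 0"
  proof -
    have r: "row A' (d - 1) = 0\<^sub>v d" using ed unfolding A'_def by (auto intro!: eq_vecI)
    show ?thesis using A' B ed r by auto
  qed
  ultimately show False by simp
qed

lemma surj_le: fixes A :: "complex mat"
  assumes A: "A \<in> carrier_mat e d" and surj: "\<forall>w\<in>carrier_vec e. \<exists>v\<in>carrier_vec d. A *\<^sub>v v = w"
  shows "e \<le> d"
proof -
  define pre where "pre j = (SOME v. v \<in> carrier_vec d \<and> A *\<^sub>v v = unit_vec e j)" for j
  have pre: "pre j \<in> carrier_vec d \<and> A *\<^sub>v pre j = unit_vec e j" if "j < e" for j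
    unfolding pre_def by (rule someI_ex, insert surj that, auto)
  define M where "M = mat d e (\<lambda>(i,j). pre j $ i)"
  have M: "M \<in> carrier_mat d e" unfolding M_def by auto
  have colM: "col M j = pre j" if "j < e" for j
    using pre[OF that] that unfolding M_def by auto
  have AM: "A * M = 1\<^sub>m e"
  proof (rule eq_matI)
    fix i j assume i: "i < dim_row (1\<^sub>m e :: complex mat)" and j: "j < dim_col (1\<^sub>m e :: complex mat)"
    have "(A * M) $$ (i,j) = row A i \<bullet> col M j" using A M i j by auto
    also have "\<dots> = row A i \<bullet> pre j" using colM j by auto
    also have "\<dots> = (A *\<^sub>v pre j) $ i" using A i by auto
    also have "\<dots> = unit_vec e j $ i" using pre j by auto
    finally show "(A * M) $$ (i,j) = 1\<^sub>m e $$ (i,j)" using i j by auto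
  qed (insert A M, auto)
  have "\<forall>u\<in>carrier_vec e. M *\<^sub>v u = 0\<^sub>v d \<longrightarrow> u = 0\<^sub>v e"
  proof (intro ballI impI)
    fix u :: "complex vec" assume u: "u \<in> carrier_vec e" and z: "M *\<^sub>v u = 0\<^sub>v d"
    have "u = (A * M) *\<^sub>v u" using AM u by auto
    also have "\<dots> = A *\<^sub>v (M *\<^sub>v u)" using A M u by auto
    also have "\<dots> = 0\<^sub>v e" using z A by auto
    finally show "u = 0\<^sub>v e" .
  qed
  from inj_le[OF M this] show ?thesis .
qed

lemma schur_iso:
  assumes ia: "irreducible_rep br S (d,\<rho>)" and ib: "irreducible_rep br S (e,\<sigma>)"
    and al: "\<alpha> \<in> carrier_mat e d" and int: "\<forall>x\<in>S. \<alpha> * \<rho> x = \<sigma> x * \<alpha>" and nz: "\<alpha> \<noteq> 0\<^sub>m e d"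
  shows "rep_equiv br S (d,\<rho>) (e,\<sigma>)"
proof -
  have ra: "is_rep br S (d,\<rho>)" and rb: "is_rep br S (e,\<sigma>)" using ia ib unfolding irreducible_rep_def by auto
  have inj: "\<forall>v\<in>carrier_vec d. \<alpha> *\<^sub>v v = 0\<^sub>v e \<longrightarrow> v = 0\<^sub>v d"
    using schur_inj[OF ia rb al int nz] by auto
  have sur: "\<forall>w\<in>carrier_vec e. \<exists>v\<in>carrier_vec d. \<alpha> *\<^sub>v v = w"
    using schur_surj[OF ra ib al int nz] by auto
  have de: "d = e" using inj_le[OF al inj] surj_le[OF al sur] by auto
  have al': "\<alpha> \<in> carrier_mat d d" using al de by simp
  have inj': "\<forall>v\<in>carrier_vec d. \<alpha> *\<^sub>v v = 0\<^sub>v d \<longrightarrow> v = 0\<^sub>v d" using inj de by simp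
  from inj_square_inv[OF al' inj'] obtain B where B: "B \<in> carrier_mat d d" "\<alpha> * B = 1\<^sub>m d" "B * \<alpha> = 1\<^sub>m d" by blast
  show ?thesis unfolding rep_equiv_iff
    apply (intro conjI)
       apply (rule ra)
      apply (rule rb)
     apply (rule de)
    apply (rule bexI[OF _ al'], rule bexI[OF _ B(1)])
    using B int by blast
qed

lemma four_block_inj:
  assumes "A \<in> carrier_mat n1 m1" "A' \<in> carrier_mat n1 m1" "B \<in> carrier_mat n1 m2" "B' \<in> carrier_mat n1 m2"
    "C \<in> carrier_mat n2 m1" "C' \<in> carrier_mat n2 m1" "D \<in> carrier_mat n2 m2" "D' \<in> carrier_mat n2 m2"
    and eq: "four_block_mat A B C D = four_block_mat A' B' C' D'"
  shows "A = A' \<and> B = B' \<and> C = C' \<and> D = D'"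
proof (intro conjI)
  let ?F = "four_block_mat A B C D" let ?F' = "four_block_mat A' B' C' D'"
  show "A = A'"
  proof (rule eq_matI)
    fix i j assume "i < dim_row A'" "j < dim_col A'"
    moreover have "?F $$ (i,j) = ?F' $$ (i,j)" by (simp only: eq)
    ultimately show "A $$ (i,j) = A' $$ (i,j)" using assms(1-8) by simp
  qed (insert assms, auto)
  show "B = B'"
  proof (rule eq_matI)
    fix i j assume "i < dim_row B'" "j < dim_col B'"
    moreover have "?F $$ (i,j + m1) = ?F' $$ (i,j + m1)" by (simp only: eq)
    ultimately show "B $$ (i,j) = B' $$ (i,j)" using assms(1-8) by simp
  qed (insert assms, auto)
  show "C = C'"
  proof (rule eq_matI)
    fix i j assume "i < dim_row C'" "j < dim_col C'"
    moreover have "?F $$ (i + n1,j) = ?F' $$ (i + n1,j)" by (simp only: eq)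
    ultimately show "C $$ (i,j) = C' $$ (i,j)" using assms(1-8) by simp
  qed (insert assms, auto)
  show "D = D'"
  proof (rule eq_matI)
    fix i j assume "i < dim_row D'" "j < dim_col D'"
    moreover have "?F $$ (i + n1,j + m1) = ?F' $$ (i + n1,j + m1)" by (simp only: eq)
    ultimately show "D $$ (i,j) = D' $$ (i,j)" using assms(1-8) by simp
  qed (insert assms, auto)
qed

lemma empty_col_mat: "A \<in> carrier_mat n 0 \<Longrightarrow> A = 0\<^sub>m n 0"
  by (rule eq_matI, auto)

lemma find_summand:
  assumes ia: "irreducible_rep br S (d,\<rho>)" and irrB: "\<forall>r\<in>set Bs. irreducible_rep br S r"
    and C: "C \<in> carrier_mat (fst (dsum_list Bs)) d" and nz: "C \<noteq> 0\<^sub>m (fst (dsum_list Bs)) d"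
    and int: "\<forall>x\<in>S. C * \<rho> x = snd (dsum_list Bs) x * C"
  shows "\<exists>b\<in>set Bs. rep_equiv br S (d,\<rho>) b"
  using irrB C nz int
proof (induction Bs arbitrary: C)
  case Nil
  then have "C \<in> carrier_mat 0 d" by (simp add: dsum_list_simps zrep_def)
  then have "C = 0\<^sub>m 0 d" by (intro eq_matI, auto)
  then show ?case using Nil by (simp add: dsum_list_simps zrep_def)
next
  case (Cons b Bs)
  obtain e \<sigma> where b: "b = (e,\<sigma>)" by fastforce
  obtain k \<tau> where L: "dsum_list Bs = (k,\<tau>)" by fastforce
  have ib: "irreducible_rep br S (e,\<sigma>)" using Cons.prems b by auto
  have irrBs: "\<forall>r\<in>set Bs. irreducible_rep br S r" using Cons.prems by auto
  have ra: "is_rep br S (d,\<rho>)" using ia unfolding irreducible_rep_def by auto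
  have rb: "is_rep br S (e,\<sigma>)" using ib unfolding irreducible_rep_def by auto
  have rL: "is_rep br S (k,\<tau>)" using is_rep_dsum_list[of Bs br S] irrBs L unfolding irreducible_rep_def by auto
  have DL: "dsum_list (b # Bs) = (e + k, \<lambda>x. bd e k e k (\<sigma> x) (\<tau> x))"
    unfolding dsum_list_simps b L dsum2_simp by simp
  have C: "C \<in> carrier_mat (e + k) (d + 0)" using Cons.prems(2) DL by simp
  have nz: "C \<noteq> 0\<^sub>m (e + k) (d + 0)" using Cons.prems(3) DL by simp
  obtain \<alpha> \<beta> \<gamma> \<delta> where sb: "split_block C e d = (\<alpha>,\<beta>,\<gamma>,\<delta>)" by (metis prod_cases4)
  note sp = split_block[OF sb, of k 0] 
  have al: "\<alpha> \<in> carrier_mat e d" and be: "\<beta> \<in> carrier_mat e 0" and ga: "\<gamma> \<in> carrier_mat k d"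
    and de: "\<delta> \<in> carrier_mat k 0" and Ceq: "C = four_block_mat \<alpha> \<beta> \<gamma> \<delta>" using sp C by auto
  have be0: "\<beta> = 0\<^sub>m e 0" and de0: "\<delta> = 0\<^sub>m k 0" using be de by (auto intro: empty_col_mat)
  have ints: "\<alpha> * \<rho> x = \<sigma> x * \<alpha> \<and> \<gamma> * \<rho> x = \<tau> x * \<gamma>" if x: "x \<in> S" for x
  proof -
    have rx: "\<rho> x \<in> carrier_mat d d" and sx: "\<sigma> x \<in> carrier_mat e e" and tx: "\<tau> x \<in> carrier_mat k k"
      using is_rep_carrier[OF ra x] is_rep_carrier[OF rb x] is_rep_carrier[OF rL x] by auto
    have rho: "\<rho> x = four_block_mat (\<rho> x) (0\<^sub>m d 0) (0\<^sub>m 0 d) (0\<^sub>m 0 0)"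
      using rx by (intro eq_matI, auto)
    have "C * \<rho> x = four_block_mat (\<alpha> * \<rho> x + 0\<^sub>m e 0 * 0\<^sub>m 0 d) (\<alpha> * 0\<^sub>m d 0 + 0\<^sub>m e 0 * 0\<^sub>m 0 0)
        (\<gamma> * \<rho> x + 0\<^sub>m k 0 * 0\<^sub>m 0 d) (\<gamma> * 0\<^sub>m d 0 + 0\<^sub>m k 0 * 0\<^sub>m 0 0)"
      unfolding Ceq be0 de0 by (subst rho, rule mult_four_block_mat, insert al ga rx, auto)
    also have "\<dots> = four_block_mat (\<alpha> * \<rho> x) (0\<^sub>m e 0) (\<gamma> * \<rho> x) (0\<^sub>m k 0)"
      using al ga rx by (intro cong_four_block_mat, auto)
    finally have 1: "C * \<rho> x = four_block_mat (\<alpha> * \<rho> x) (0\<^sub>m e 0) (\<gamma> * \<rho> x) (0\<^sub>m k 0)" .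
    have "bd e k e k (\<sigma> x) (\<tau> x) * C = four_block_mat (\<sigma> x * \<alpha> + 0\<^sub>m e k * \<gamma>) (\<sigma> x * 0\<^sub>m e 0 + 0\<^sub>m e k * 0\<^sub>m k 0)
        (0\<^sub>m k e * \<alpha> + \<tau> x * \<gamma>) (0\<^sub>m k e * 0\<^sub>m e 0 + \<tau> x * 0\<^sub>m k 0)"
      unfolding Ceq be0 de0 by (rule mult_four_block_mat, insert al ga sx tx, auto)
    also have "\<dots> = four_block_mat (\<sigma> x * \<alpha>) (0\<^sub>m e 0) (\<tau> x * \<gamma>) (0\<^sub>m k 0)"
      using al ga sx tx by (intro cong_four_block_mat, auto)
    finally have 2: "bd e k e k (\<sigma> x) (\<tau> x) * C = four_block_mat (\<sigma> x * \<alpha>) (0\<^sub>m e 0) (\<tau> x * \<gamma>) (0\<^sub>m k 0)" .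
    have "C * \<rho> x = bd e k e k (\<sigma> x) (\<tau> x) * C" using Cons.prems(4) x DL by simp
    with 1 2 have "four_block_mat (\<alpha> * \<rho> x) (0\<^sub>m e 0) (\<gamma> * \<rho> x) (0\<^sub>m k 0)
       = four_block_mat (\<sigma> x * \<alpha>) (0\<^sub>m e 0) (\<tau> x * \<gamma>) (0\<^sub>m k 0)" by simp
    from four_block_inj[OF _ _ _ _ _ _ _ _ this, of e d 0 k] al ga rx sx tx
    show ?thesis by auto
  qed
  show ?case
  proof (cases "\<alpha> = 0\<^sub>m e d")
    case False
    have "rep_equiv br S (d,\<rho>) (e,\<sigma>)" using schur_iso[OF ia ib al _ False] ints by auto
    then show ?thesis using b by auto
  next
    case True
    have "\<gamma> \<noteq> 0\<^sub>m k d"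
    proof
      assume "\<gamma> = 0\<^sub>m k d"
      then have "C = 0\<^sub>m (e + k) (d + 0)" unfolding Ceq be0 de0 True by simp
      then show False using nz by simp
    qed
    then have "\<exists>b\<in>set Bs. rep_equiv br S (d,\<rho>) b"
      using Cons.IH[OF irrBs, of \<gamma>] ga ints L by auto
    then show ?thesis by auto
  qed
qed

lemma fb_mult_one:
  fixes \<alpha> :: "complex mat"
  assumes c: "\<alpha> \<in> carrier_mat d d" "\<beta> \<in> carrier_mat d k" "\<gamma> \<in> carrier_mat k d" "\<delta> \<in> carrier_mat k k"
    "\<alpha>' \<in> carrier_mat d d" "\<beta>' \<in> carrier_mat d k" "\<gamma>' \<in> carrier_mat k d" "\<delta>' \<in> carrier_mat k k"
    and eq: "four_block_mat \<alpha> \<beta> \<gamma> \<delta> * four_block_mat \<alpha>' \<beta>' \<gamma>' \<delta>' = 1\<^sub>m (d + k)"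
  shows "\<alpha> * \<alpha>' + \<beta> * \<gamma>' = 1\<^sub>m d \<and> \<alpha> * \<beta>' + \<beta> * \<delta>' = 0\<^sub>m d k \<and>
    \<gamma> * \<alpha>' + \<delta> * \<gamma>' = 0\<^sub>m k d \<and> \<gamma> * \<beta>' + \<delta> * \<delta>' = 1\<^sub>m k"
proof -
  have "four_block_mat (\<alpha> * \<alpha>' + \<beta> * \<gamma>') (\<alpha> * \<beta>' + \<beta> * \<delta>') (\<gamma> * \<alpha>' + \<delta> * \<gamma>') (\<gamma> * \<beta>' + \<delta> * \<delta>')
    = four_block_mat (1\<^sub>m d) (0\<^sub>m d k) (0\<^sub>m k d) (1\<^sub>m k)"
    using eq by (subst (asm) mult_four_block_mat[OF c], simp)
  from four_block_inj[of _ d d _ _ k _ _ k, OF _ _ _ _ _ _ _ _ this] c show ?thesis by auto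
qed

lemma fb_int:
  fixes \<alpha> :: "complex mat"
  assumes c: "\<alpha> \<in> carrier_mat n1 m1" "\<beta> \<in> carrier_mat n1 m2" "\<gamma> \<in> carrier_mat n2 m1" "\<delta> \<in> carrier_mat n2 m2"
    and cp: "P \<in> carrier_mat m1 m1" "Q \<in> carrier_mat m2 m2" "P' \<in> carrier_mat n1 n1" "Q' \<in> carrier_mat n2 n2"
    and eq: "four_block_mat \<alpha> \<beta> \<gamma> \<delta> * bd m1 m2 m1 m2 P Q = bd n1 n2 n1 n2 P' Q' * four_block_mat \<alpha> \<beta> \<gamma> \<delta>"
  shows "\<alpha> * P = P' * \<alpha> \<and> \<beta> * Q = P' * \<beta> \<and> \<gamma> * P = Q' * \<gamma> \<and> \<delta> * Q = Q' * \<delta>"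
proof -
  have 1: "four_block_mat \<alpha> \<beta> \<gamma> \<delta> * bd m1 m2 m1 m2 P Q = four_block_mat (\<alpha> * P) (\<beta> * Q) (\<gamma> * P) (\<delta> * Q)"
    by (subst mult_four_block_mat[OF c], insert c cp, auto)
  have 2: "bd n1 n2 n1 n2 P' Q' * four_block_mat \<alpha> \<beta> \<gamma> \<delta> = four_block_mat (P' * \<alpha>) (P' * \<beta>) (Q' * \<gamma>) (Q' * \<delta>)"
    by (subst mult_four_block_mat[of _ n1 n1 _ n2 _ n2 _ _ m1 _ m2], insert c cp, auto)
  from eq 1 2 have "four_block_mat (\<alpha> * P) (\<beta> * Q) (\<gamma> * P) (\<delta> * Q) = four_block_mat (P' * \<alpha>) (P' * \<beta>) (Q' * \<gamma>) (Q' * \<delta>)" by simp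
  from four_block_inj[of _ n1 m1 _ _ m2 _ _ n2, OF _ _ _ _ _ _ _ _ this] c cp show ?thesis by auto
qed

lemma mat_neg_of_sum: fixes X :: "complex mat"
  assumes "X \<in> carrier_mat n m" "Y \<in> carrier_mat n m" "X + Y = 0\<^sub>m n m" shows "Y = - X"
proof (rule eq_matI)
  fix i j assume ij: "i < dim_row (- X)" "j < dim_col (- X)"
  have h: "(X + Y) $$ (i,j) = 0\<^sub>m n m $$ (i,j)" by (simp only: assms(3))
  have "X $$ (i,j) + Y $$ (i,j) = 0" using h assms(1,2) ij by simp
  then show "Y $$ (i,j) = (- X) $$ (i,j)" using assms(1,2) ij by (simp add: eq_neg_iff_add_eq_0 add.commute)
qed (insert assms, auto)

lemma mat_minus_neg: fixes X :: "complex mat"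
  assumes "X \<in> carrier_mat n m" "Y \<in> carrier_mat n m" shows "X - (- Y) = X + Y"
  by (rule eq_matI, insert assms, auto)

lemma cancel_core:
  fixes \<alpha> \<beta> \<gamma> \<delta> Si :: "complex mat"
  assumes rX: "is_rep br S (k,\<xi>)" and rY: "is_rep br S (k,\<eta>)" and ra: "is_rep br S (d,\<rho>)"
    and c: "\<alpha> \<in> carrier_mat d d" "\<beta> \<in> carrier_mat d k" "\<gamma> \<in> carrier_mat k d" "\<delta> \<in> carrier_mat k k"
    and Si: "Si \<in> carrier_mat (d + k) (d + k)"
    and TSi: "four_block_mat \<alpha> \<beta> \<gamma> \<delta> * Si = 1\<^sub>m (d + k)"
    and SiT: "Si * four_block_mat \<alpha> \<beta> \<gamma> \<delta> = 1\<^sub>m (d + k)"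
    and int: "\<forall>x\<in>S. four_block_mat \<alpha> \<beta> \<gamma> \<delta> * bd d k d k (\<rho> x) (\<xi> x) = bd d k d k (\<rho> x) (\<eta> x) * four_block_mat \<alpha> \<beta> \<gamma> \<delta>"
    and ai: "\<alpha>i \<in> carrier_mat d d" "\<alpha> * \<alpha>i = 1\<^sub>m d" "\<alpha>i * \<alpha> = 1\<^sub>m d"
  shows "rep_equiv br S (k,\<xi>) (k,\<eta>)"
proof -
  obtain \<alpha>' \<beta>' \<gamma>' \<delta>' where sb: "split_block Si d d = (\<alpha>',\<beta>',\<gamma>',\<delta>')" by (metis prod_cases4)
  note sp = split_block[OF sb, of k k]
  have c': "\<alpha>' \<in> carrier_mat d d" "\<beta>' \<in> carrier_mat d k" "\<gamma>' \<in> carrier_mat k d" "\<delta>' \<in> carrier_mat k k"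
    and Sieq: "Si = four_block_mat \<alpha>' \<beta>' \<gamma>' \<delta>'" using sp Si by auto
  from fb_mult_one[OF c c', folded Sieq, OF TSi]
  have e2: "\<alpha> * \<beta>' + \<beta> * \<delta>' = 0\<^sub>m d k" and e4: "\<gamma> * \<beta>' + \<delta> * \<delta>' = 1\<^sub>m k" by auto
  from fb_mult_one[OF c' c, folded Sieq, OF SiT]
  have f3: "\<gamma>' * \<alpha> + \<delta>' * \<gamma> = 0\<^sub>m k d" and f4: "\<gamma>' * \<beta> + \<delta>' * \<delta> = 1\<^sub>m k" by auto
  note cm = mult_carrier_mat
  have bd': "\<beta> * \<delta>' = - (\<alpha> * \<beta>')" by (rule mat_neg_of_sum[OF cm[OF c(1) c'(2)] cm[OF c(2) c'(4)] e2])
  have dg': "\<delta>' * \<gamma> = - (\<gamma>' * \<alpha>)" by (rule mat_neg_of_sum[OF cm[OF c'(3) c(1)] cm[OF c'(4) c(3)] f3])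
  have aib: "\<alpha>i * \<beta> \<in> carrier_mat d k" by (rule cm[OF ai(1) c(2)])
  have gaib: "\<gamma> * (\<alpha>i * \<beta>) \<in> carrier_mat k k" by (rule cm[OF c(3) aib])
  define K where "K = \<delta> - \<gamma> * (\<alpha>i * \<beta>)"
  have Kc: "K \<in> carrier_mat k k" unfolding K_def by (rule minus_carrier_mat[OF gaib])
  have m1: "\<gamma> * (\<alpha>i * \<beta>) * \<delta>' = - (\<gamma> * \<beta>')"
  proof -
    have "\<gamma> * (\<alpha>i * \<beta>) * \<delta>' = \<gamma> * (\<alpha>i * (\<beta> * \<delta>'))"
      by (simp only: assoc_mult_mat[OF c(3) aib c'(4)] assoc_mult_mat[OF ai(1) c(2) c'(4)])
    also have "\<dots> = - (\<gamma> * (\<alpha>i * (\<alpha> * \<beta>')))"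
    proof -
      have 1: "\<alpha>i * - (\<alpha> * \<beta>') = - (\<alpha>i * (\<alpha> * \<beta>'))" by (rule uminus_mult_right_mat, insert ai(1) c(1) c'(2), auto)
      have 2: "\<gamma> * - (\<alpha>i * (\<alpha> * \<beta>')) = - (\<gamma> * (\<alpha>i * (\<alpha> * \<beta>')))" by (rule uminus_mult_right_mat, insert ai(1) c(1,3) c'(2), auto)
      show ?thesis by (simp only: bd' 1 2)
    qed
    also have "\<alpha>i * (\<alpha> * \<beta>') = \<beta>'"
      by (simp only: assoc_mult_mat[OF ai(1) c(1) c'(2), symmetric] ai(3) left_mult_one_mat[OF c'(2)])
    finally show ?thesis .
  qed
  have "K * \<delta>' = \<delta> * \<delta>' - (\<gamma> * (\<alpha>i * \<beta>)) * \<delta>'"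
    unfolding K_def by (rule minus_mult_distrib_mat[OF c(4) gaib c'(4)])
  also have "\<dots> = \<delta> * \<delta>' + \<gamma> * \<beta>'" unfolding m1 by (rule mat_minus_neg[OF cm[OF c(4) c'(4)] cm[OF c(3) c'(2)]])
  also have "\<dots> = 1\<^sub>m k" using e4 comm_add_mat[OF cm[OF c(4) c'(4)] cm[OF c(3) c'(2)]] by simp
  finally have K1: "K * \<delta>' = 1\<^sub>m k" .
  have m2: "\<delta>' * (\<gamma> * (\<alpha>i * \<beta>)) = - (\<gamma>' * \<beta>)"
  proof -
    have "\<delta>' * (\<gamma> * (\<alpha>i * \<beta>)) = (\<delta>' * \<gamma>) * (\<alpha>i * \<beta>)"
      by (simp only: assoc_mult_mat[OF c'(4) c(3) aib])
    also have "\<dots> = - (\<gamma>' * \<alpha> * (\<alpha>i * \<beta>))"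
    proof -
      have 1: "- (\<gamma>' * \<alpha>) * (\<alpha>i * \<beta>) = - (\<gamma>' * \<alpha> * (\<alpha>i * \<beta>))" by (rule uminus_mult_left_mat, insert ai(1) c(1,2) c'(3), auto)
      show ?thesis by (simp only: dg' 1)
    qed
    also have "\<gamma>' * \<alpha> * (\<alpha>i * \<beta>) = \<gamma>' * \<beta>"
      by (simp only: assoc_mult_mat[OF c'(3) c(1) aib] assoc_mult_mat[OF c(1) ai(1) c(2), symmetric] ai(2) left_mult_one_mat[OF c(2)])
    finally show ?thesis .
  qed
  have "\<delta>' * K = \<delta>' * \<delta> - \<delta>' * (\<gamma> * (\<alpha>i * \<beta>))"
    unfolding K_def by (rule mult_minus_distrib_mat[OF c'(4) c(4) gaib])
  also have "\<dots> = \<delta>' * \<delta> + \<gamma>' * \<beta>" unfolding m2 by (rule mat_minus_neg[OF cm[OF c'(4) c(4)] cm[OF c'(3) c(2)]])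
  also have "\<dots> = 1\<^sub>m k" using f4 comm_add_mat[OF cm[OF c'(4) c(4)] cm[OF c'(3) c(2)]] by simp
  finally have K2: "\<delta>' * K = 1\<^sub>m k" .
  have K3: "K * \<xi> x = \<eta> x * K" if x: "x \<in> S" for x
  proof -
    have rx: "\<rho> x \<in> carrier_mat d d" and cx: "\<xi> x \<in> carrier_mat k k" and ex: "\<eta> x \<in> carrier_mat k k"
      using is_rep_carrier[OF ra x] is_rep_carrier[OF rX x] is_rep_carrier[OF rY x] by auto
    from fb_int[OF c rx cx rx ex int[rule_format, OF x]]
    have a1: "\<alpha> * \<rho> x = \<rho> x * \<alpha>" and b1: "\<beta> * \<xi> x = \<rho> x * \<beta>"
      and c1: "\<gamma> * \<rho> x = \<eta> x * \<gamma>" and d1: "\<delta> * \<xi> x = \<eta> x * \<delta>" by auto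
    have air: "\<alpha>i * \<rho> x = \<rho> x * \<alpha>i"
    proof -
      have "\<alpha>i * \<rho> x = \<alpha>i * \<rho> x * (\<alpha> * \<alpha>i)" using right_mult_one_mat[OF cm[OF ai(1) rx]] ai(2) by simp
      also have "\<dots> = \<alpha>i * (\<rho> x * \<alpha>) * \<alpha>i"
        by (simp only: assoc_mult_mat[OF ai(1) rx c(1)] assoc_mult_mat[OF cm[OF ai(1) rx] c(1) ai(1), symmetric])
      also have "\<dots> = \<alpha>i * (\<alpha> * \<rho> x) * \<alpha>i" unfolding a1 ..
      also have "\<dots> = (\<alpha>i * \<alpha>) * \<rho> x * \<alpha>i"
        by (simp only: assoc_mult_mat[OF ai(1) c(1) rx])
      also have "\<dots> = \<rho> x * \<alpha>i" using ai(3) left_mult_one_mat[OF rx] by simp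
      finally show ?thesis .
    qed
    have "K * \<xi> x = \<delta> * \<xi> x - (\<gamma> * (\<alpha>i * \<beta>)) * \<xi> x"
      unfolding K_def by (rule minus_mult_distrib_mat[OF c(4) gaib cx])
    also have "(\<gamma> * (\<alpha>i * \<beta>)) * \<xi> x = \<gamma> * (\<alpha>i * (\<beta> * \<xi> x))"
      by (simp only: assoc_mult_mat[OF c(3) aib cx] assoc_mult_mat[OF ai(1) c(2) cx])
    also have "\<dots> = \<gamma> * ((\<alpha>i * \<rho> x) * \<beta>)" by (simp only: b1 assoc_mult_mat[OF ai(1) rx c(2)])
    also have "\<dots> = (\<gamma> * \<rho> x) * (\<alpha>i * \<beta>)"
      by (simp only: air assoc_mult_mat[OF rx ai(1) c(2)] assoc_mult_mat[OF c(3) rx aib])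
    also have "\<dots> = \<eta> x * (\<gamma> * (\<alpha>i * \<beta>))" by (simp only: c1 assoc_mult_mat[OF ex c(3) aib])
    also have "\<delta> * \<xi> x - \<eta> x * (\<gamma> * (\<alpha>i * \<beta>)) = \<eta> x * \<delta> - \<eta> x * (\<gamma> * (\<alpha>i * \<beta>))"
      by (simp only: d1)
    also have "\<dots> = \<eta> x * K" unfolding K_def by (rule mult_minus_distrib_mat[OF ex c(4) gaib, symmetric])
    finally show ?thesis .
  qed
  show ?thesis unfolding rep_equiv_iff
    apply (intro conjI)
       apply (rule rX)
      apply (rule rY)
     apply (rule refl)
    apply (rule bexI[OF _ Kc], rule bexI[OF _ c'(4)])
    using K1 K2 K3 by blast
qed

lemma uminus_zero_mat'[simp]: "- (0\<^sub>m n m :: 'a :: group_add mat) = 0\<^sub>m n m"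
  by (rule eq_matI, auto)

lemma cancel_irr:
  assumes ia: "irreducible_rep br S (d,\<rho>)" and rX: "is_rep br S (k,\<xi>)" and rY: "is_rep br S (l,\<eta>)"
    and eqv: "rep_equiv br S (dsum2 (d,\<rho>) (k,\<xi>)) (dsum2 (d,\<rho>) (l,\<eta>))"
  shows "rep_equiv br S (k,\<xi>) (l,\<eta>)"
proof -
  have ra: "is_rep br S (d,\<rho>)" using ia unfolding irreducible_rep_def by auto
  from eqv[unfolded dsum2_simp rep_equiv_iff] obtain T Si where
    kl: "d + k = d + l" and T: "T \<in> carrier_mat (d+k) (d+k)" and Si: "Si \<in> carrier_mat (d+k) (d+k)"
    and TSi: "T * Si = 1\<^sub>m (d+k)" and SiT: "Si * T = 1\<^sub>m (d+k)"
    and int0: "\<forall>x\<in>S. T * bd d k d k (\<rho> x) (\<xi> x) = bd d l d l (\<rho> x) (\<eta> x) * T" by blast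
  from kl have lk: "l = k" by simp
  note int = int0[unfolded lk]
  note rY = rY[unfolded lk]
  obtain \<alpha> \<beta> \<gamma> \<delta> where sb: "split_block T d d = (\<alpha>,\<beta>,\<gamma>,\<delta>)" by (metis prod_cases4)
  note sp = split_block[OF sb, of k k]
  have c: "\<alpha> \<in> carrier_mat d d" "\<beta> \<in> carrier_mat d k" "\<gamma> \<in> carrier_mat k d" "\<delta> \<in> carrier_mat k k"
    and Teq: "T = four_block_mat \<alpha> \<beta> \<gamma> \<delta>" using sp T by auto
  obtain \<alpha>' \<beta>' \<gamma>' \<delta>' where sb': "split_block Si d d = (\<alpha>',\<beta>',\<gamma>',\<delta>')" by (metis prod_cases4)
  note sp' = split_block[OF sb', of k k]
  have c': "\<alpha>' \<in> carrier_mat d d" "\<beta>' \<in> carrier_mat d k" "\<gamma>' \<in> carrier_mat k d" "\<delta>' \<in> carrier_mat k k"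
    and Sieq: "Si = four_block_mat \<alpha>' \<beta>' \<gamma>' \<delta>'" using sp' Si by auto
  note cm = mult_carrier_mat
  have ints: "\<alpha> * \<rho> x = \<rho> x * \<alpha>" if x: "x \<in> S" for x
    using fb_int[OF c is_rep_carrier[OF ra x] is_rep_carrier[OF rX x] is_rep_carrier[OF ra x] is_rep_carrier[OF rY x]]
      int x Teq by auto
  show ?thesis unfolding lk
  proof (cases "\<alpha> = 0\<^sub>m d d")
    case False
    have inj: "\<forall>v\<in>carrier_vec d. \<alpha> *\<^sub>v v = 0\<^sub>v d \<longrightarrow> v = 0\<^sub>v d"
      using schur_inj[OF ia ra c(1) _ False] ints by blast
    from inj_square_inv[OF c(1) inj] obtain \<alpha>i where ai: "\<alpha>i \<in> carrier_mat d d" "\<alpha> * \<alpha>i = 1\<^sub>m d" "\<alpha>i * \<alpha> = 1\<^sub>m d" by blast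
    show "rep_equiv br S (k, \<xi>) (k, \<eta>)"
      by (rule cancel_core[OF rX rY ra c Si _ _ _ ai], insert TSi SiT int Teq, auto)
  next
    case True
    let ?X = "\<lambda>x. bd d k d k (\<rho> x) (\<xi> x)" let ?Y = "\<lambda>x. bd d k d k (\<rho> x) (\<eta> x)"
    have cX: "?X x \<in> carrier_mat (d+k) (d+k)" and cY: "?Y x \<in> carrier_mat (d+k) (d+k)" if "x \<in> S" for x
      using is_rep_carrier[OF ra that] is_rep_carrier[OF rX that] is_rep_carrier[OF rY that] by auto
    have intSi: "Si * ?Y x = ?X x * Si" if x: "x \<in> S" for x
    proof -
      note cc = cX[OF x] cY[OF x]
      have "Si * ?Y x = Si * ?Y x * (T * Si)" using TSi right_mult_one_mat[OF cm[OF Si cc(2)]] by simp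
      also have "\<dots> = Si * (?Y x * T) * Si" using cc Si T by (simp add: assoc_mult_mat[of _ "d+k" "d+k" _ "d+k" _ "d+k"])
      also have "\<dots> = Si * (T * ?X x) * Si" using int x by simp
      also have "\<dots> = (Si * T) * ?X x * Si" using cc Si T by (simp add: assoc_mult_mat[of _ "d+k" "d+k" _ "d+k" _ "d+k"])
      also have "\<dots> = ?X x * Si" using SiT left_mult_one_mat[OF cc(1)] by simp
      finally show ?thesis .
    qed
    have bint: "\<beta>' * \<eta> x = \<rho> x * \<beta>'" if x: "x \<in> S" for x
      using fb_int[OF c' is_rep_carrier[OF ra x] is_rep_carrier[OF rY x] is_rep_carrier[OF ra x] is_rep_carrier[OF rX x]]
        intSi[OF x] Sieq by auto
    from fb_mult_one[OF c' c, folded Sieq Teq, OF SiT]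
    have "\<alpha>' * \<alpha> + \<beta>' * \<gamma> = 1\<^sub>m d" by auto
    then have bg: "\<beta>' * \<gamma> = 1\<^sub>m d" unfolding True using c c' by simp
    define U where "U = four_block_mat (1\<^sub>m d) \<beta>' (0\<^sub>m k d) (1\<^sub>m k)"
    define Ui where "Ui = four_block_mat (1\<^sub>m d) (- \<beta>') (0\<^sub>m k d) (1\<^sub>m k)"
    have U: "U \<in> carrier_mat (d+k) (d+k)" and Ui: "Ui \<in> carrier_mat (d+k) (d+k)" unfolding U_def Ui_def by auto
    have UUi: "U * Ui = 1\<^sub>m (d+k)" unfolding U_def Ui_def
      by (subst mult_four_block_mat[of _ d d _ k _ k _ _ d _ k], insert c', auto)
    have b1: "1\<^sub>m d * \<beta>' + - \<beta>' * 1\<^sub>m k = 0\<^sub>m d k"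
    proof -
      have "- \<beta>' * 1\<^sub>m k = - \<beta>'" using right_mult_one_mat[OF uminus_carrier_mat[OF c'(2)]] .
      then show ?thesis using left_mult_one_mat[OF c'(2)] minus_r_inv_mat[OF c'(2)] minus_add_uminus_mat[OF c'(2) c'(2)] by simp
    qed
    have UiU: "Ui * U = 1\<^sub>m (d+k)"
    proof -
      have "Ui * U = four_block_mat (1\<^sub>m d * 1\<^sub>m d + - \<beta>' * 0\<^sub>m k d) (1\<^sub>m d * \<beta>' + - \<beta>' * 1\<^sub>m k)
         (0\<^sub>m k d * 1\<^sub>m d + 1\<^sub>m k * 0\<^sub>m k d) (0\<^sub>m k d * \<beta>' + 1\<^sub>m k * 1\<^sub>m k)"
        unfolding U_def Ui_def by (rule mult_four_block_mat, insert c', auto)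
      also have "\<dots> = four_block_mat (1\<^sub>m d) (0\<^sub>m d k) (0\<^sub>m k d) (1\<^sub>m k)"
        by (rule cong_four_block_mat, insert c' b1, auto)
      finally show ?thesis by simp
    qed
    have UY: "U * ?Y x = ?Y x * U" if x: "x \<in> S" for x
    proof -
      have rx: "\<rho> x \<in> carrier_mat d d" and ex: "\<eta> x \<in> carrier_mat k k"
        using is_rep_carrier[OF ra x] is_rep_carrier[OF rY x] by auto
      have "U * ?Y x = four_block_mat (\<rho> x) (\<beta>' * \<eta> x) (0\<^sub>m k d) (\<eta> x)" unfolding U_def
        by (subst mult_four_block_mat[of _ d d _ k _ k _ _ d _ k], insert c' rx ex, auto)
      moreover have "?Y x * U = four_block_mat (\<rho> x) (\<rho> x * \<beta>') (0\<^sub>m k d) (\<eta> x)" unfolding U_def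
        by (subst mult_four_block_mat[of _ d d _ k _ k _ _ d _ k], insert c' rx ex, auto)
      ultimately show ?thesis using bint[OF x] by simp
    qed
    define T2 where "T2 = U * T"
    define Si2 where "Si2 = Si * Ui"
    have T2eq: "T2 = four_block_mat (1\<^sub>m d) (\<beta> + \<beta>' * \<delta>) \<gamma> \<delta>"
    proof -
      have "T2 = four_block_mat (1\<^sub>m d * \<alpha> + \<beta>' * \<gamma>) (1\<^sub>m d * \<beta> + \<beta>' * \<delta>) (0\<^sub>m k d * \<alpha> + 1\<^sub>m k * \<gamma>) (0\<^sub>m k d * \<beta> + 1\<^sub>m k * \<delta>)"
        unfolding T2_def U_def Teq by (rule mult_four_block_mat, insert c c', auto)
      also have "\<dots> = four_block_mat (1\<^sub>m d) (\<beta> + \<beta>' * \<delta>) \<gamma> \<delta>"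
        using c c' bg unfolding True by (intro cong_four_block_mat, auto)
      finally show ?thesis .
    qed
    have Si2: "Si2 \<in> carrier_mat (d+k) (d+k)" unfolding Si2_def using Si Ui by auto
    have T2Si2: "T2 * Si2 = 1\<^sub>m (d+k)"
    proof -
      have "T2 * Si2 = U * (T * Si) * Ui" unfolding T2_def Si2_def using U T Si Ui
        by (simp add: assoc_mult_mat[of _ "d+k" "d+k" _ "d+k" _ "d+k"])
      also have "\<dots> = 1\<^sub>m (d+k)" using TSi UUi right_mult_one_mat[OF U] by simp
      finally show ?thesis .
    qed
    have Si2T2: "Si2 * T2 = 1\<^sub>m (d+k)"
    proof -
      have "Si2 * T2 = Si * (Ui * U) * T" unfolding T2_def Si2_def using U T Si Ui
        by (simp add: assoc_mult_mat[of _ "d+k" "d+k" _ "d+k" _ "d+k"])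
      also have "\<dots> = 1\<^sub>m (d+k)" using SiT UiU right_mult_one_mat[OF Si] by simp
      finally show ?thesis .
    qed
    have int2: "\<forall>x\<in>S. T2 * ?X x = ?Y x * T2"
    proof
      fix x assume x: "x \<in> S"
      note cc = cX[OF x] cY[OF x]
      have "T2 * ?X x = U * (T * ?X x)" unfolding T2_def using U T cc by simp
      also have "\<dots> = U * (?Y x * T)" using int x by simp
      also have "\<dots> = (U * ?Y x) * T" using U T cc by simp
      also have "\<dots> = (?Y x * U) * T" using UY[OF x] by simp
      also have "\<dots> = ?Y x * T2" unfolding T2_def using U T cc by simp
      finally show "T2 * ?X x = ?Y x * T2" .
    qed
    have c2: "1\<^sub>m d \<in> carrier_mat d d" "\<beta> + \<beta>' * \<delta> \<in> carrier_mat d k" using c c' by auto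
    show "rep_equiv br S (k, \<xi>) (k, \<eta>)"
      by (rule cancel_core[OF rX rY ra c2 c(3,4) Si2 _ _ _ c2(1)], insert T2Si2 Si2T2 int2 T2eq, auto)
  qed
qed

lemma rep_equiv_fst: "rep_equiv br S r s \<Longrightarrow> fst r = fst s"
  by (cases r, cases s, auto simp: rep_equiv_iff)

lemma rep_equiv_is_rep: "rep_equiv br S r s \<Longrightarrow> is_rep br S r \<and> is_rep br S s"
  unfolding rep_equiv_def by auto

lemma irr_pos: "irreducible_rep br S r \<Longrightarrow> fst r > 0"
  by (cases r, auto simp: irreducible_rep_def)

lemma first_col_nonzero:
  assumes ia: "irreducible_rep br S (d,\<rho>)" and rX: "is_rep br S (k,\<xi>)" and rB: "is_rep br S (D,\<sigma>)"
    and eqv: "rep_equiv br S (dsum2 (d,\<rho>) (k,\<xi>)) (D,\<sigma>)"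
  shows "\<exists>C\<in>carrier_mat D d. C \<noteq> 0\<^sub>m D d \<and> (\<forall>x\<in>S. C * \<rho> x = \<sigma> x * C)"
proof -
  have ra: "is_rep br S (d,\<rho>)" using ia unfolding irreducible_rep_def by auto
  have dpos: "d > 0" using irr_pos[OF ia] by simp
  from eqv[unfolded dsum2_simp rep_equiv_iff] obtain T Si where
    D: "d + k = D" and T: "T \<in> carrier_mat (d+k) (d+k)" and Si: "Si \<in> carrier_mat (d+k) (d+k)"
    and TSi: "T * Si = 1\<^sub>m (d+k)" and SiT: "Si * T = 1\<^sub>m (d+k)"
    and int: "\<forall>x\<in>S. T * bd d k d k (\<rho> x) (\<xi> x) = \<sigma> x * T" by blast
  define E where "E = four_block_mat (1\<^sub>m d) (0\<^sub>m d 0) (0\<^sub>m k d) (0\<^sub>m k 0 :: complex mat)"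
  have E: "E \<in> carrier_mat (d+k) d" unfolding E_def
    using four_block_carrier_mat[of "1\<^sub>m d :: complex mat" d d "0\<^sub>m k 0 :: complex mat" k 0] by simp
  have Enz: "E \<noteq> 0\<^sub>m (d+k) d"
  proof
    assume "E = 0\<^sub>m (d+k) d"
    then have "E $$ (0,0) = 0" using dpos by simp
    moreover have "E $$ (0,0) = 1" unfolding E_def using dpos by simp
    ultimately show False by simp
  qed
  have EX: "bd d k d k (\<rho> x) (\<xi> x) * E = E * \<rho> x" if x: "x \<in> S" for x
  proof -
    have rx: "\<rho> x \<in> carrier_mat d d" and cx: "\<xi> x \<in> carrier_mat k k"
      using is_rep_carrier[OF ra x] is_rep_carrier[OF rX x] by auto
    have rho: "\<rho> x = four_block_mat (\<rho> x) (0\<^sub>m d 0) (0\<^sub>m 0 d) (0\<^sub>m 0 0)"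
      using rx by (intro eq_matI, auto)
    have 1: "bd d k d k (\<rho> x) (\<xi> x) * E = four_block_mat (\<rho> x) (0\<^sub>m d 0) (0\<^sub>m k d) (0\<^sub>m k 0)"
      unfolding E_def by (subst mult_four_block_mat[of _ d d _ k _ k _ _ d _ 0], insert rx cx, auto)
    have 2: "E * \<rho> x = four_block_mat (\<rho> x) (0\<^sub>m d 0) (0\<^sub>m k d) (0\<^sub>m k 0)"
      unfolding E_def by (subst rho, subst mult_four_block_mat[of _ d d _ 0 _ k _ _ d _ 0], insert rx, auto)
    show ?thesis using 1 2 by simp
  qed
  define C where "C = T * E"
  have C: "C \<in> carrier_mat D d" unfolding C_def using T E D by auto
  have "C \<noteq> 0\<^sub>m D d"
  proof
    assume "C = 0\<^sub>m D d"
    then have "Si * C = 0\<^sub>m (d+k) d" using Si D by simp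
    moreover have "Si * C = E" unfolding C_def using Si T E SiT
      by (simp add: assoc_mult_mat[of Si "d+k" "d+k" T "d+k" E d, symmetric])
    ultimately show False using Enz by simp
  qed
  moreover have "\<forall>x\<in>S. C * \<rho> x = \<sigma> x * C"
  proof
    fix x assume x: "x \<in> S"
    have rx: "\<rho> x \<in> carrier_mat d d" and cx: "\<xi> x \<in> carrier_mat k k" and sx: "\<sigma> x \<in> carrier_mat D D"
      using is_rep_carrier[OF ra x] is_rep_carrier[OF rX x] is_rep_carrier[OF rB x] by auto
    have bx: "bd d k d k (\<rho> x) (\<xi> x) \<in> carrier_mat (d+k) (d+k)" using rx cx by auto
    have "C * \<rho> x = T * (E * \<rho> x)" unfolding C_def using T E rx by simp
    also have "\<dots> = T * (bd d k d k (\<rho> x) (\<xi> x) * E)" using EX[OF x] by simp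
    also have "\<dots> = (T * bd d k d k (\<rho> x) (\<xi> x)) * E" using T E bx by simp
    also have "\<dots> = (\<sigma> x * T) * E" using int x by simp
    also have "\<dots> = \<sigma> x * C" unfolding C_def using T E sx D by simp
    finally show "C * \<rho> x = \<sigma> x * C" .
  qed
  ultimately show ?thesis using C by blast
qed


lemma mult_unique:
  assumes irr: "\<forall>j<q. irreducible_rep br S (\<psi>s j)"
    and ineq: "\<forall>j<q. \<forall>l<q. j \<noteq> l \<longrightarrow> \<not> rep_equiv br S (\<psi>s j) (\<psi>s l)"
    and A: "\<forall>j\<in>set A. j < q" and B: "\<forall>j\<in>set B. j < q"
    and eqv: "rep_equiv br S (dsum_list (map \<psi>s A)) (dsum_list (map \<psi>s B))"
  shows "mset A = mset B"
  using A B eqv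
proof (induction A arbitrary: B)
  case Nil
  have "fst (dsum_list (map \<psi>s B)) = 0"
    using rep_equiv_fst[OF Nil.prems(3)] by (simp add: dsum_list_simps zrep_def)
  then have "sum_list (map (fst \<circ> \<psi>s) B) = 0" by (simp add: fst_dsum_list)
  moreover have "\<forall>j\<in>set B. fst (\<psi>s j) > 0" using Nil.prems(2) irr irr_pos by blast
  ultimately have "B = []" by (cases B, auto)
  then show ?case by simp
next
  case (Cons j A)
  have jq: "j < q" and Aq: "\<forall>j\<in>set A. j < q" using Cons.prems by auto
  obtain d \<rho> where pj: "\<psi>s j = (d,\<rho>)" by fastforce
  obtain k \<xi> where LA: "dsum_list (map \<psi>s A) = (k,\<xi>)" by fastforce
  obtain D \<sigma> where LB: "dsum_list (map \<psi>s B) = (D,\<sigma>)" by fastforce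
  have ia: "irreducible_rep br S (d,\<rho>)" using irr jq pj by metis
  have irrA: "\<forall>r\<in>set (map \<psi>s A). irreducible_rep br S r" using irr Aq by auto
  have irrB: "\<forall>r\<in>set (map \<psi>s B). irreducible_rep br S r" using irr Cons.prems(2) by auto
  have repA: "\<forall>r\<in>set (map \<psi>s A). is_rep br S r" using irrA unfolding irreducible_rep_def by auto
  have repB: "\<forall>r\<in>set (map \<psi>s B). is_rep br S r" using irrB unfolding irreducible_rep_def by auto
  have rX: "is_rep br S (k,\<xi>)" using is_rep_dsum_list[OF repA] LA by simp
  have rB: "is_rep br S (D,\<sigma>)" using is_rep_dsum_list[OF repB] LB by simp
  have eqv: "rep_equiv br S (dsum2 (d,\<rho>) (k,\<xi>)) (D,\<sigma>)"
    using Cons.prems(3) pj LA LB by (simp add: dsum_list_simps)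
  from first_col_nonzero[OF ia rX rB eqv] obtain C where C: "C \<in> carrier_mat D d" "C \<noteq> 0\<^sub>m D d"
    "\<forall>x\<in>S. C * \<rho> x = \<sigma> x * C" by blast
  have "\<exists>b\<in>set (map \<psi>s B). rep_equiv br S (d,\<rho>) b"
    by (rule find_summand[OF ia irrB, of C], insert C LB, auto)
  then obtain b where b: "b \<in> set (map \<psi>s B)" "rep_equiv br S (d,\<rho>) b" by blast
  then obtain j' where j': "j' \<in> set B" "b = \<psi>s j'" by auto
  have "j' = j"
  proof (rule ccontr)
    assume "j' \<noteq> j"
    then show False using ineq jq Cons.prems(2) j' b pj by metis
  qed
  with j' have jB: "j \<in> set B" by simp
  define B' where "B' = remove1 j B"
  have mB: "mset B = mset (j # B')" unfolding B'_def using jB by simp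
  have B'q: "\<forall>j\<in>set B'. j < q" unfolding B'_def using Cons.prems(2) by (meson notin_set_remove1)
  obtain l \<eta> where LB': "dsum_list (map \<psi>s B') = (l,\<eta>)" by fastforce
  have repB': "\<forall>r\<in>set (map \<psi>s B'). is_rep br S r" using irr B'q unfolding irreducible_rep_def by auto
  have rY: "is_rep br S (l,\<eta>)" using is_rep_dsum_list[OF repB'] LB' by simp
  have "rep_equiv br S (dsum_list (map \<psi>s B)) (dsum_list (map \<psi>s (j # B')))"
    by (rule dsum_list_perm, insert mB repB, auto)
  then have "rep_equiv br S (D,\<sigma>) (dsum2 (d,\<rho>) (l,\<eta>))"
    using LB LB' pj by (simp add: dsum_list_simps)
  then have "rep_equiv br S (dsum2 (d,\<rho>) (k,\<xi>)) (dsum2 (d,\<rho>) (l,\<eta>))"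
    by (rule rep_equiv_trans[OF eqv])
  from cancel_irr[OF ia rX rY this]
  have "rep_equiv br S (dsum_list (map \<psi>s A)) (dsum_list (map \<psi>s B'))" using LA LB' by simp
  from Cons.IH[OF Aq B'q this] have "mset A = mset B'" .
  then show ?case using mB by simp
qed

lemma sum1_char:
  fixes f :: "nat \<Rightarrow> nat"
  assumes s: "(\<Sum>l<q. f l) = 1"
  shows "\<exists>j<q. \<forall>l<q. f l = (if l = j then 1 else 0)"
proof -
  have "\<exists>j<q. f j \<noteq> 0"
  proof (rule ccontr)
    assume "\<not> ?thesis"
    then have "(\<Sum>l<q. f l) = 0" by simp
    with s show False by simp
  qed
  then obtain j where j: "j < q" "f j \<noteq> 0" by blast
  have split: "(\<Sum>l<q. f l) = f j + (\<Sum>l\<in>{..<q} - {j}. f l)"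
    by (rule sum.remove, insert j, auto)
  then have fr: "f j + (\<Sum>l\<in>{..<q} - {j}. f l) = 1" using s by simp
  then have fj: "f j = 1" and rest: "(\<Sum>l\<in>{..<q} - {j}. f l) = 0" using j(2) by arith+
  from rest have "\<forall>l\<in>{..<q} - {j}. f l = 0" by simp
  then show ?thesis using j fj by (intro exI[of _ j], auto)
qed

lemma sum_le_eq_each:
  fixes f g :: "nat \<Rightarrow> nat"
  assumes "finite A" "\<And>x. x \<in> A \<Longrightarrow> f x \<le> g x"
  shows "sum f A = sum g A \<longleftrightarrow> (\<forall>x\<in>A. f x = g x)"
  using sum_mono_inv[of f A g] assms by (auto intro: sum.cong)

lemma comb:
  fixes m :: "nat \<Rightarrow> nat" and nn :: "nat \<Rightarrow> nat \<Rightarrow> nat" and n :: "nat \<Rightarrow> nat"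
  assumes N: "\<forall>j<q. n j = (\<Sum>i<p. m i * nn j i)"
    and C1: "\<forall>i<p. (\<Sum>j<q. nn j i) \<ge> 1"
  shows "((\<forall>i<p. m i \<noteq> 0 \<longrightarrow> (\<Sum>j<q. nn j i) = 1) \<longleftrightarrow> (\<Sum>j<q. n j) = (\<Sum>i<p. m i))
       \<and> ((\<Sum>j<q. (n j)^2) = (\<Sum>i<p. (m i)^2) \<longrightarrow> (\<Sum>j<q. n j) = (\<Sum>i<p. m i))
       \<and> ((\<Sum>j<q. (n j)^2) = (\<Sum>i<p. (m i)^2) \<longleftrightarrow>
            ((\<Sum>j<q. n j) = (\<Sum>i<p. m i) \<and>
             (\<forall>i<p. \<forall>k<p. i \<noteq> k \<and> m i \<noteq> 0 \<and> m k \<noteq> 0 \<longrightarrow> \<not> (\<forall>j<q. nn j i = nn j k))))"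
proof -
  define c where "c i = (\<Sum>j<q. nn j i)" for i
  define G where "G i k = (\<Sum>j<q. nn j i * nn j k)" for i k
  have S1: "(\<Sum>j<q. n j) = (\<Sum>i<p. m i * c i)"
  proof -
    have "(\<Sum>j<q. n j) = (\<Sum>j<q. \<Sum>i<p. m i * nn j i)" using N by simp
    also have "\<dots> = (\<Sum>i<p. \<Sum>j<q. m i * nn j i)" by (rule sum.swap)
    also have "\<dots> = (\<Sum>i<p. m i * c i)" unfolding c_def by (simp add: sum_distrib_left)
    finally show ?thesis .
  qed
  have le1: "m i \<le> m i * c i" if "i \<in> {..<p}" for i using C1 that unfolding c_def by auto
  have A: "(\<Sum>j<q. n j) = (\<Sum>i<p. m i) \<longleftrightarrow> (\<forall>i<p. m i \<noteq> 0 \<longrightarrow> c i = 1)"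
  proof -
    have "(\<Sum>j<q. n j) = (\<Sum>i<p. m i) \<longleftrightarrow> (\<Sum>i<p. m i) = (\<Sum>i<p. m i * c i)" using S1 by auto
    also have "\<dots> \<longleftrightarrow> (\<forall>i\<in>{..<p}. m i = m i * c i)" by (rule sum_le_eq_each, insert le1, auto)
    also have "\<dots> \<longleftrightarrow> (\<forall>i<p. m i \<noteq> 0 \<longrightarrow> c i = 1)"
    proof -
      have "m i = m i * c i \<longleftrightarrow> (m i \<noteq> 0 \<longrightarrow> c i = 1)" for i by auto
      then show ?thesis by (auto simp: Ball_def)
    qed
    finally show ?thesis .
  qed
  have S2: "(\<Sum>j<q. (n j)^2) = (\<Sum>i<p. \<Sum>k<p. m i * m k * G i k)"
  proof -
    have "(\<Sum>j<q. (n j)^2) = (\<Sum>j<q. (\<Sum>i<p. m i * nn j i) * (\<Sum>k<p. m k * nn j k))"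
      using N by (simp add: power2_eq_square)
    also have "\<dots> = (\<Sum>j<q. \<Sum>i<p. \<Sum>k<p. m i * m k * (nn j i * nn j k))"
      by (simp add: sum_product algebra_simps)
    also have "\<dots> = (\<Sum>i<p. \<Sum>j<q. \<Sum>k<p. m i * m k * (nn j i * nn j k))" by (rule sum.swap)
    also have "\<dots> = (\<Sum>i<p. \<Sum>k<p. \<Sum>j<q. m i * m k * (nn j i * nn j k))" by (simp add: sum.swap[of _ "{..<q}"])
    also have "\<dots> = (\<Sum>i<p. \<Sum>k<p. m i * m k * G i k)" unfolding G_def by (simp add: sum_distrib_left)
    finally show ?thesis .
  qed
  define D where "D i k = (if i = k then m i * m k else 0)" for i k :: nat
  have S3: "(\<Sum>i<p. (m i)^2) = (\<Sum>i<p. \<Sum>k<p. D i k)"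
    unfolding D_def by (simp add: power2_eq_square)
  have cG: "c i \<le> G i i" for i unfolding c_def G_def by (rule sum_mono, simp add: le_square)
  have DleG: "D i k \<le> m i * m k * G i k" if "i < p" for i k
  proof (cases "i = k")
    case True
    have "1 \<le> G i i" using cG[of i] C1 that unfolding c_def by (meson le_trans)
    then show ?thesis unfolding D_def using True by simp
  qed (simp add: D_def)
  have S4: "(\<Sum>j<q. (n j)^2) = (\<Sum>i<p. (m i)^2) \<longleftrightarrow> (\<forall>i<p. \<forall>k<p. D i k = m i * m k * G i k)"
  proof -
    have "(\<Sum>j<q. (n j)^2) = (\<Sum>i<p. (m i)^2) \<longleftrightarrow> (\<Sum>i<p. \<Sum>k<p. D i k) = (\<Sum>i<p. \<Sum>k<p. m i * m k * G i k)"
      using S2 S3 by auto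
    also have "\<dots> \<longleftrightarrow> (\<forall>i\<in>{..<p}. (\<Sum>k<p. D i k) = (\<Sum>k<p. m i * m k * G i k))"
      by (rule sum_le_eq_each, auto intro!: sum_mono DleG)
    also have "\<dots> \<longleftrightarrow> (\<forall>i<p. \<forall>k<p. D i k = m i * m k * G i k)"
    proof -
      have "(\<Sum>k<p. D i k) = (\<Sum>k<p. m i * m k * G i k) \<longleftrightarrow> (\<forall>k\<in>{..<p}. D i k = m i * m k * G i k)" if "i < p" for i
        by (rule sum_le_eq_each, insert DleG that, auto)
      then show ?thesis by auto
    qed
    finally show ?thesis .
  qed
  have c1G: "G i i = 1 \<longleftrightarrow> c i = 1" if "i < p" for i
  proof
    assume "G i i = 1"
    then show "c i = 1" using cG[of i] C1 that unfolding c_def by fastforce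
  next
    assume ci: "c i = 1"
    then obtain j where j: "j < q" "\<forall>l<q. nn l i = (if l = j then 1 else 0)"
      using sum1_char[of "\<lambda>l. nn l i" q] unfolding c_def by auto
    have "G i i = (\<Sum>l<q. nn l i)" unfolding G_def by (rule sum.cong, insert j, auto)
    then show "G i i = 1" using ci unfolding c_def by simp
  qed
  have G0: "G i k = 0 \<longleftrightarrow> \<not> (\<forall>j<q. nn j i = nn j k)" if cik: "c i = 1" "c k = 1" "i < p" "k < p" for i k
  proof -
    obtain a where a: "a < q" "\<forall>l<q. nn l i = (if l = a then 1 else 0)"
      using sum1_char[of "\<lambda>l. nn l i" q] cik unfolding c_def by auto
    obtain b where b: "b < q" "\<forall>l<q. nn l k = (if l = b then 1 else 0)"
      using sum1_char[of "\<lambda>l. nn l k" q] cik unfolding c_def by auto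
    have "G i k = (\<Sum>l<q. if l = a \<and> l = b then 1 else 0)" unfolding G_def by (rule sum.cong, insert a b, auto)
    also have "\<dots> = (if a = b then 1 else 0)" using a b by (auto simp: sum.delta)
    finally have g: "G i k = (if a = b then 1 else 0)" .
    have "(\<forall>j<q. nn j i = nn j k) \<longleftrightarrow> a = b"
    proof
      assume "\<forall>j<q. nn j i = nn j k"
      then have "nn a k = 1" using a by auto
      then show "a = b" using b a(1) by (metis zero_neq_one)
    qed (insert a b, auto)
    then show ?thesis using g by auto
  qed
  have B: "(\<Sum>j<q. (n j)^2) = (\<Sum>i<p. (m i)^2) \<longrightarrow> (\<forall>i<p. m i \<noteq> 0 \<longrightarrow> c i = 1)"
  proof (intro impI allI)
    fix i assume eq: "(\<Sum>j<q. (n j)^2) = (\<Sum>i<p. (m i)^2)" and i: "i < p" "m i \<noteq> 0"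
    then have "D i i = m i * m i * G i i" using S4 by auto
    then have "G i i = 1" using i unfolding D_def by simp
    then show "c i = 1" using c1G i by auto
  qed
  have Cc: "(\<Sum>j<q. (n j)^2) = (\<Sum>i<p. (m i)^2) \<longleftrightarrow>
            ((\<Sum>j<q. n j) = (\<Sum>i<p. m i) \<and>
             (\<forall>i<p. \<forall>k<p. i \<noteq> k \<and> m i \<noteq> 0 \<and> m k \<noteq> 0 \<longrightarrow> \<not> (\<forall>j<q. nn j i = nn j k)))"
  proof
    assume eq: "(\<Sum>j<q. (n j)^2) = (\<Sum>i<p. (m i)^2)"
    have cs: "\<forall>i<p. m i \<noteq> 0 \<longrightarrow> c i = 1" using B eq by auto
    show "(\<Sum>j<q. n j) = (\<Sum>i<p. m i) \<and>
             (\<forall>i<p. \<forall>k<p. i \<noteq> k \<and> m i \<noteq> 0 \<and> m k \<noteq> 0 \<longrightarrow> \<not> (\<forall>j<q. nn j i = nn j k))"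
    proof (intro conjI allI impI)
      show "(\<Sum>j<q. n j) = (\<Sum>i<p. m i)" using A cs by auto
    next
      fix i k assume ik: "i < p" "k < p" "i \<noteq> k \<and> m i \<noteq> 0 \<and> m k \<noteq> 0"
      then have "D i k = m i * m k * G i k" using S4 eq by auto
      then have "G i k = 0" using ik unfolding D_def by simp
      then show "\<not> (\<forall>j<q. nn j i = nn j k)" using G0[of i k] cs ik by auto
    qed
  next
    assume h: "(\<Sum>j<q. n j) = (\<Sum>i<p. m i) \<and>
             (\<forall>i<p. \<forall>k<p. i \<noteq> k \<and> m i \<noteq> 0 \<and> m k \<noteq> 0 \<longrightarrow> \<not> (\<forall>j<q. nn j i = nn j k))"
    have cs: "\<forall>i<p. m i \<noteq> 0 \<longrightarrow> c i = 1" using A h by auto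
    have "\<forall>i<p. \<forall>k<p. D i k = m i * m k * G i k"
    proof (intro allI impI)
      fix i k assume i: "i < p" and k: "k < p"
      show "D i k = m i * m k * G i k"
      proof (cases "m i = 0 \<or> m k = 0")
        case True then show ?thesis unfolding D_def by auto
      next
        case False
        show ?thesis
        proof (cases "i = k")
          case True
          then show ?thesis using c1G[OF i] cs False i unfolding D_def by auto
        next
          case ne: False
          have "G i k = 0" using G0[of i k] cs False i k h ne by auto
          then show ?thesis using ne unfolding D_def by simp
        qed
      qed
    qed
    then show "(\<Sum>j<q. (n j)^2) = (\<Sum>i<p. (m i)^2)" using S4 by auto
  qed
  show ?thesis using A B Cc unfolding c_def by auto
qed

lemma is_rep_mono: "S' \<subseteq> S \<Longrightarrow> is_rep br S r \<Longrightarrow> is_rep br S' r"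
  unfolding is_rep_def by (cases r, auto simp: subset_iff)

lemma rep_equiv_mono: assumes "S' \<subseteq> S" "rep_equiv br S r s" shows "rep_equiv br S' r s"
proof (cases r; cases s)
  fix d \<rho> e \<sigma> assume r: "r = (d,\<rho>)" and s: "s = (e,\<sigma>)"
  from assms(2)[unfolded r s rep_equiv_iff] obtain T B where
    h: "is_rep br S (d,\<rho>)" "is_rep br S (e,\<sigma>)" "d = e" "T \<in> carrier_mat d d" "B \<in> carrier_mat d d"
       "T * B = 1\<^sub>m d" "B * T = 1\<^sub>m d" "\<forall>x\<in>S. T * \<rho> x = \<sigma> x * T" by blast
  have "is_rep br S' (d,\<rho>)" "is_rep br S' (e,\<sigma>)" using is_rep_mono[OF assms(1)] h by auto
  then show ?thesis unfolding r s rep_equiv_iff using h assms(1) by blast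
qed

definition idx :: "(nat \<Rightarrow> nat) \<Rightarrow> nat \<Rightarrow> nat list" where
  "idx f q = concat (map (\<lambda>j. replicate (f j) j) [0..<q])"

lemma multi_sum_idx: "multi_sum \<phi>s m p = dsum_list (map \<phi>s (idx m p))"
  unfolding multi_sum_def idx_def by (simp add: map_concat comp_def)

lemma idx_bound: "\<forall>j\<in>set (idx f q). j < q"
  unfolding idx_def by auto

lemma count_concat: "count (mset (concat xss)) a = sum_list (map (\<lambda>xs. count (mset xs) a) xss)"
  by (induction xss, auto)

lemma count_idx: "count (mset (idx f q)) j = (if j < q then f j else 0)"
proof -
  have "count (mset (idx f q)) j = sum_list (map (\<lambda>l. count (mset (replicate (f l) l)) j) [0..<q])"
    unfolding idx_def by (simp add: count_concat comp_def)
  also have "\<dots> = (\<Sum>l<q. if l = j then f l else 0)"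
    by (simp add: sum_list_map_eq_sum_count2[symmetric] atLeast0LessThan[symmetric] sum_set_upt_conv_sum_list_nat[symmetric])
  also have "\<dots> = (if j < q then f j else 0)" by (simp add: sum.delta)
  finally show ?thesis .
qed

lemma compose:
  assumes "\<forall>i\<in>set Is. rep_equiv br S (\<phi>s i) (dsum_list (map \<psi>s (L i)))"
    and "\<forall>i\<in>set Is. \<forall>j\<in>set (L i). is_rep br S (\<psi>s j)"
  shows "rep_equiv br S (dsum_list (map \<phi>s Is)) (dsum_list (map \<psi>s (concat (map L Is))))"
  using assms
proof (induction Is)
  case Nil
  then show ?case by (simp add: dsum_list_simps rep_equiv_refl is_rep_zrep)
next
  case (Cons i Is)
  have 1: "rep_equiv br S (dsum_list (map \<phi>s (i # Is))) (dsum2 (dsum_list (map \<psi>s (L i))) (dsum_list (map \<psi>s (concat (map L Is)))))"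
    unfolding list.map dsum_list_simps by (rule dsum2_cong, insert Cons, auto)
  have 2: "rep_equiv br S (dsum2 (dsum_list (map \<psi>s (L i))) (dsum_list (map \<psi>s (concat (map L Is))))) (dsum_list (map \<psi>s (L i) @ map \<psi>s (concat (map L Is))))"
    by (rule rep_equiv_sym, rule dsum_list_append, insert Cons.prems(2), auto)
  show ?case using rep_equiv_trans[OF 1 2] by simp
qed

lemma sum_list_idx: "sum_list (map g (idx f p)) = (\<Sum>i<p. f i * g i)"
  by (induction p, auto simp: idx_def sum_list_replicate)

lemma length_idx: "length (idx f q) = (\<Sum>j<q. f j)"
  by (induction q, auto simp: idx_def)

lemma idx_cong: "(\<forall>j<q. f j = g j) \<Longrightarrow> idx f q = idx g q"
  unfolding idx_def by (auto intro!: arg_cong[where f = concat] map_cong)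

theorem proposition2:
  fixes br :: "'g::euclidean_space \<Rightarrow> 'g \<Rightarrow> 'g"
    and H :: "'g set"
    and \<phi> :: "'g rep" and \<phi>s :: "nat \<Rightarrow> 'g rep" and m :: "nat \<Rightarrow> nat" and p :: nat
    and \<psi>s :: "nat \<Rightarrow> 'g rep" and n :: "nat \<Rightarrow> nat" and nn :: "nat \<Rightarrow> nat \<Rightarrow> nat" and q :: nat
  assumes "compact_lie_algebra br"
    and "lie_subalgebra br H"
    and "is_rep br UNIV \<phi>"
    and "\<forall>i<p. irreducible_rep br UNIV (\<phi>s i)"
    and "\<forall>i<p. \<forall>k<p. i \<noteq> k \<longrightarrow> \<not> rep_equiv br UNIV (\<phi>s i) (\<phi>s k)"
    and "rep_equiv br UNIV \<phi> (multi_sum \<phi>s m p)"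
    and "\<forall>j<q. irreducible_rep br H (\<psi>s j)"
    and "\<forall>j<q. \<forall>l<q. j \<noteq> l \<longrightarrow> \<not> rep_equiv br H (\<psi>s j) (\<psi>s l)"
    and "rep_equiv br H \<phi> (multi_sum \<psi>s n q)"
    and "\<forall>i<p. rep_equiv br H (\<phi>s i) (multi_sum \<psi>s (\<lambda>j. nn j i) q)"
  shows "((\<forall>i<p. m i \<noteq> 0 \<longrightarrow> (\<Sum>j<q. nn j i) = 1) \<longleftrightarrow> (\<Sum>j<q. n j) = (\<Sum>i<p. m i))
       \<and> ((\<Sum>j<q. (n j)^2) = (\<Sum>i<p. (m i)^2) \<longrightarrow> (\<Sum>j<q. n j) = (\<Sum>i<p. m i))
       \<and> ((\<Sum>j<q. (n j)^2) = (\<Sum>i<p. (m i)^2) \<longleftrightarrow>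
            ((\<Sum>j<q. n j) = (\<Sum>i<p. m i) \<and>
             (\<forall>i<p. \<forall>k<p. i \<noteq> k \<and> m i \<noteq> 0 \<and> m k \<noteq> 0 \<longrightarrow>
                 \<not> rep_equiv br H (\<phi>s i) (\<phi>s k))))"
proof -
  note irrU = assms(4) and eqU = assms(6) and irrH = assms(7) and ineqH = assms(8)
    and eqn = assms(9) and eqnn = assms(10)
  define Lc where "Lc i = idx (\<lambda>j. nn j i) q" for i
  have repH: "\<forall>j<q. is_rep br H (\<psi>s j)" using irrH unfolding irreducible_rep_def by auto
  have eqnn': "\<forall>i<p. rep_equiv br H (\<phi>s i) (dsum_list (map \<psi>s (Lc i)))"
    using eqnn unfolding Lc_def multi_sum_idx by auto
  have E1: "rep_equiv br H \<phi> (dsum_list (map \<phi>s (idx m p)))"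
    using rep_equiv_mono[OF _ eqU, of H] unfolding multi_sum_idx by auto
  have E2: "rep_equiv br H (dsum_list (map \<phi>s (idx m p))) (dsum_list (map \<psi>s (concat (map Lc (idx m p)))))"
    by (rule compose, insert eqnn' repH idx_bound[of m p] idx_bound[of "\<lambda>j. nn j _" q], auto simp: Lc_def)
  have E3: "rep_equiv br H (dsum_list (map \<psi>s (idx n q))) (dsum_list (map \<psi>s (concat (map Lc (idx m p)))))"
    using rep_equiv_trans[OF rep_equiv_trans[OF rep_equiv_sym[OF eqn[unfolded multi_sum_idx]] E1] E2] .
  have ms: "mset (idx n q) = mset (concat (map Lc (idx m p)))"
    by (rule mult_unique[OF irrH ineqH _ _ E3], insert idx_bound[of n q] idx_bound[of "\<lambda>j. nn j _" q], auto simp: Lc_def)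
  have N: "\<forall>j<q. n j = (\<Sum>i<p. m i * nn j i)"
  proof (intro allI impI)
    fix j assume j: "j < q"
    have "n j = count (mset (idx n q)) j" using count_idx[of n q j] j by simp
    also have "\<dots> = count (mset (concat (map Lc (idx m p)))) j" using ms by simp
    also have "\<dots> = sum_list (map (\<lambda>i. count (mset (Lc i)) j) (idx m p))" by (simp add: count_concat comp_def)
    also have "\<dots> = (\<Sum>i<p. m i * count (mset (Lc i)) j)" by (rule sum_list_idx)
    also have "\<dots> = (\<Sum>i<p. m i * nn j i)" unfolding Lc_def count_idx using j by simp
    finally show "n j = (\<Sum>i<p. m i * nn j i)" .
  qed
  have C1: "\<forall>i<p. (\<Sum>j<q. nn j i) \<ge> 1"
  proof (intro allI impI)
    fix i assume i: "i < p"
    show "(\<Sum>j<q. nn j i) \<ge> 1"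
    proof (rule ccontr)
      assume "\<not> ?thesis"
      then have s0: "(\<Sum>j<q. nn j i) = 0" by linarith
      have "length (Lc i) = 0" unfolding Lc_def length_idx by (rule s0)
      then have "Lc i = []" by simp
      then have "fst (\<phi>s i) = 0" using rep_equiv_fst[OF eqnn'[rule_format, OF i]] by (simp add: dsum_list_simps zrep_def)
      then show False using irr_pos[of br UNIV "\<phi>s i"] irrU i by auto
    qed
  qed
  have EQ: "rep_equiv br H (\<phi>s i) (\<phi>s k) \<longleftrightarrow> (\<forall>j<q. nn j i = nn j k)" if i: "i < p" and k: "k < p" for i k
  proof
    assume e: "rep_equiv br H (\<phi>s i) (\<phi>s k)"
    have "rep_equiv br H (dsum_list (map \<psi>s (Lc i))) (dsum_list (map \<psi>s (Lc k)))"
      using rep_equiv_trans[OF rep_equiv_trans[OF rep_equiv_sym[OF eqnn'[rule_format, OF i]] e] eqnn'[rule_format, OF k]] .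
    then have "mset (Lc i) = mset (Lc k)"
      by (rule mult_unique[OF irrH ineqH, rotated 2], auto simp: Lc_def idx_bound)
    then have "count (mset (Lc i)) j = count (mset (Lc k)) j" for j by simp
    then show "\<forall>j<q. nn j i = nn j k" unfolding Lc_def count_idx by (metis)
  next
    assume "\<forall>j<q. nn j i = nn j k"
    then have "Lc i = Lc k" unfolding Lc_def by (intro idx_cong, auto)
    then have "rep_equiv br H (\<phi>s i) (dsum_list (map \<psi>s (Lc k)))" using eqnn' i by metis
    then show "rep_equiv br H (\<phi>s i) (\<phi>s k)"
      using rep_equiv_trans rep_equiv_sym[OF eqnn'[rule_format, OF k]] by blast
  qed
  have "(\<forall>i<p. \<forall>k<p. i \<noteq> k \<and> m i \<noteq> 0 \<and> m k \<noteq> 0 \<longrightarrow> \<not> rep_equiv br H (\<phi>s i) (\<phi>s k)) \<longleftrightarrow>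
        (\<forall>i<p. \<forall>k<p. i \<noteq> k \<and> m i \<noteq> 0 \<and> m k \<noteq> 0 \<longrightarrow> \<not> (\<forall>j<q. nn j i = nn j k))"
    using EQ by auto
  then show ?thesis using comb[OF N C1] by simp
qed

end
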